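(* Let $H = (V,E)$ be a hypertree with $|V| = n$ such that $|e|$ is prime for each edge $e \in E$. Fix an ordering of the edges $E = \{e_1, \ldots, e_k\}$ with $|(e_{1} \cup \cdots \cup e_{i})\cap e_{i+1}| = 1$ for all $1 \leq i < k$, and fix a cyclic permutation $c_i: e_i\rightarrow e_i$ of each edge $e_i$. Then $$X_H = \sum_{\pi} F_{\mathrm{Des}_H(\pi)},$$ the sum over all bijections $\pi: V \to [n]$, where $\mathrm{Des}_H(\pi)$ is the set of $H$-descents of $\pi$ with respect to the chosen edge-ordering and cyclic permutations.
   Context: A hypergraph is a pair $H=(V,E)$ with $V$ finite and $E$ a family of subsets of $V$ with $|e|>1$. A path is a sequence $v_1, e_1, v_2, \ldots, e_m, v_{m+1}$ with $e_i \in E$, $v_i, v_{i+1} \in e_i$, edges distinct and vertices distinct except that $v_1 = v_{m+1}$ is allowed; if $v_1 = v_{m+1}$ and $m>1$ it is a cycle. A hypertree is a connected hypergraph with no cycles; between any two distinct vertices there is a unique path. $H$-descents: for a bijection $\pi: V \to [n]$ and $i \in [n-1]$, let $\pi^{-1}(i) = v_1, e_{j_1}, v_2, \ldots, e_{j_l}, v_{l+1} = \pi^{-1}(i+1)$ be the unique path, and let $j_r = \min(j_1,\ldots,j_l)$; then $i \in \mathrm{Des}_H(\pi)$ iff $\pi(c_{j_r}(v_r)) > \pi(c_{j_r}(v_{r+1}))$. A coloring $\chi: V \to \mathbb{P}=\{1,2,\ldots\}$ is proper if it is nonconstant on every edge; $X_H = \sum_\chi \prod_{v\in V} x_{\chi(v)}$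 over proper colorings. For $S \subseteq [n-1]$, $F_S = \sum x_{i_1}\cdots x_{i_n}$ over $i_1 \le \cdots \le i_n$ in $\mathbb{P}$ with $i_j < i_{j+1}$ whenever $j \in S$. *)

theory Defs
  imports "HOL-Combinatorics.Permutations" "HOL-Library.FuncSet"
          "HOL-Computational_Algebra.Primes"
begin

definition hypergraph :: "'v set \<Rightarrow> 'v set set \<Rightarrow> bool" where
  "hypergraph V E \<longleftrightarrow> finite V \<and> (\<forall>f\<in>E. f \<subseteq> V \<and> card f > 1)"

definition hpath :: "'v set set \<Rightarrow> 'v list \<Rightarrow> 'v set list \<Rightarrow> bool" where
  "hpath E vs es \<longleftrightarrow>
     length vs = length es + 1 \<and> distinct es \<and> set es \<subseteq> E \<and>
     (\<forall>i<length es. vs ! i \<in> es ! i \<and> vs ! (i+1) \<in> es ! i) \<and>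
     (\<forall>i j. i < j \<and> j < length vs \<and> vs ! i = vs ! j \<longrightarrow> i = 0 \<and> j = length es)"

definition hcycle :: "'v set set \<Rightarrow> 'v list \<Rightarrow> 'v set list \<Rightarrow> bool" where
  "hcycle E vs es \<longleftrightarrow> hpath E vs es \<and> hd vs = last vs \<and> length es > 1"

definition hconnected :: "'v set \<Rightarrow> 'v set set \<Rightarrow> bool" where
  "hconnected V E \<longleftrightarrow>
     (\<forall>u\<in>V. \<forall>w\<in>V. \<exists>vs es. hpath E vs es \<and> hd vs = u \<and> last vs = w)"

definition hypertree :: "'v set \<Rightarrow> 'v set set \<Rightarrow> bool" where
  "hypertree V E \<longleftrightarrow> hypergraph V E \<and> hconnected V E \<and> \<not> (\<exists>vs es. hcycle E vs es)"

definition cyclic_perm :: "('v \<Rightarrow> 'v) \<Rightarrow> 'v set \<Rightarrow> bool" where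
  "cyclic_perm c f \<longleftrightarrow> c permutes f \<and> (\<forall>x\<in>f. \<forall>y\<in>f. \<exists>m. (c ^^ m) x = y)"

definition H_descents ::
  "'v set \<Rightarrow> 'v set set \<Rightarrow> (nat \<Rightarrow> 'v set) \<Rightarrow> nat \<Rightarrow> (nat \<Rightarrow> 'v \<Rightarrow> 'v) \<Rightarrow> ('v \<Rightarrow> nat) \<Rightarrow> nat set"
where
  "H_descents V E e k c \<pi> =
     {i \<in> {1..<card V}.
        let (vs, es) = (THE p. hpath E (fst p) (snd p) \<and>
                               hd (fst p) = inv_into V \<pi> i \<and> last (fst p) = inv_into V \<pi> (i+1));
            idx = (\<lambda>f. THE j. j \<in> {1..k} \<and> e j = f);
            r = (ARG_MIN (\<lambda>t. idx (es ! t)) t. t < length es);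
            jr = idx (es ! r)
        in \<pi> (c jr (vs ! r)) > \<pi> (c jr (vs ! (r+1)))}"

text \<open>Coefficient of the monomial prod_a x_a^(\<alpha> a) in X_H (colours in P = {1,2,...}).\<close>
definition X_coeff :: "'v set \<Rightarrow> 'v set set \<Rightarrow> (nat \<Rightarrow> nat) \<Rightarrow> nat" where
  "X_coeff V E \<alpha> = card {\<chi> \<in> V \<rightarrow>\<^sub>E UNIV.
      (\<forall>v\<in>V. \<chi> v \<ge> 1) \<and> (\<forall>f\<in>E. \<exists>u\<in>f. \<exists>w\<in>f. \<chi> u \<noteq> \<chi> w) \<and>
      (\<forall>a. card {v\<in>V. \<chi> v = a} = \<alpha> a)}"

text \<open>Coefficient of the monomial prod_a x_a^(\<alpha> a) in F_S (n variables, sequences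
  i_1 \<le> ... \<le> i_n in P with strict ascent at positions in S).\<close>
definition F_coeff :: "nat \<Rightarrow> nat set \<Rightarrow> (nat \<Rightarrow> nat) \<Rightarrow> nat" where
  "F_coeff n S \<alpha> = card {s \<in> {1..n} \<rightarrow>\<^sub>E UNIV.
      (\<forall>j\<in>{1..n}. s j \<ge> 1) \<and>
      (\<forall>j. 1 \<le> j \<and> j < n \<longrightarrow> s j \<le> s (j+1) \<and> (j \<in> S \<longrightarrow> s j < s (j+1))) \<and>
      (\<forall>a. card {j\<in>{1..n}. s j = a} = \<alpha> a)}"

end

theory Submission
  imports Defs "HOL-Combinatorics.Orbits"
begin


section \<open>Walks and paths\<close>

fun wadj :: "'v list \<Rightarrow> 'v set list \<Rightarrow> bool" where
  "wadj [v] [] = True"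
| "wadj (v # w # vs) (f # fs) = (v \<in> f \<and> w \<in> f \<and> wadj (w # vs) fs)"
| "wadj _ _ = False"

lemma wadj_iff:
  "wadj vs es \<longleftrightarrow> length vs = length es + 1 \<and> (\<forall>i<length es. vs!i \<in> es!i \<and> vs!(Suc i) \<in> es!i)"
proof (induction vs es rule: wadj.induct)
  case (2 v w vs f fs)
  show ?case by (simp only: wadj.simps 2) (auto simp: All_less_Suc2)
qed auto

lemma wadj_ne: "wadj vs es \<Longrightarrow> vs \<noteq> []"
  by (auto simp: wadj_iff)

lemma wadj_append:
  "wadj xs es1 \<Longrightarrow> wadj ys es2 \<Longrightarrow> last xs = hd ys \<Longrightarrow> wadj (xs @ tl ys) (es1 @ es2)"
proof (induction xs es1 rule: wadj.induct)
  case (1 v)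
  then have "ys = v # tl ys" using wadj_ne by (metis list.collapse last_ConsL)
  then show ?case using 1 by (metis append_Cons append_Nil self_append_conv2)
next
  case (2 v w vs f fs)
  then show ?case by simp
qed auto

lemma wadj_rev: "wadj vs es \<Longrightarrow> wadj (rev vs) (rev es)"
proof (induction vs es rule: wadj.induct)
  case (2 v w vs f fs)
  then have a: "wadj (rev (w # vs)) (rev fs)" by simp
  have b: "wadj [w, v] [f]" using 2 by simp
  have "wadj (rev (w # vs) @ tl [w, v]) (rev fs @ [f])"
    by (rule wadj_append[OF a b]) simp
  then show ?case by simp
qed auto

lemma wadj_take: "wadj vs es \<Longrightarrow> t \<le> length es \<Longrightarrow> wadj (take (Suc t) vs) (take t es)"
  by (auto simp: wadj_iff)

lemma wadj_drop: "wadj vs es \<Longrightarrow> t \<le> length es \<Longrightarrow> wadj (drop t vs) (drop t es)"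
  by (auto simp: wadj_iff add.commute)

lemma last_append_tl:
  "xs \<noteq> [] \<Longrightarrow> ys \<noteq> [] \<Longrightarrow> last xs = hd ys \<Longrightarrow> last (xs @ tl ys) = last ys"
  by (cases ys) auto

lemma vdist_iff:
  assumes "length vs = Suc m"
  shows "(\<forall>i j. i < j \<and> j < length vs \<and> vs ! i = vs ! j \<longrightarrow> i = 0 \<and> j = m)
     \<longleftrightarrow> distinct (butlast vs) \<and> distinct (tl vs)"
proof
  assume A: "\<forall>i j. i < j \<and> j < length vs \<and> vs ! i = vs ! j \<longrightarrow> i = 0 \<and> j = m"
  have 1: "distinct (butlast vs)"
    unfolding distinct_conv_nth
  proof (intro allI impI)
    fix i j assume h: "i < length (butlast vs)" "j < length (butlast vs)" "i \<noteq> j"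
    show "butlast vs ! i \<noteq> butlast vs ! j"
    proof
      assume "butlast vs ! i = butlast vs ! j"
      then have "vs ! i = vs ! j" using h by (simp add: nth_butlast)
      then show False using A[rule_format, of i j] A[rule_format, of j i] h assms by (cases "i < j") auto
    qed
  qed
  have 2: "distinct (tl vs)"
    unfolding distinct_conv_nth
  proof (intro allI impI)
    fix i j assume h: "i < length (tl vs)" "j < length (tl vs)" "i \<noteq> j"
    show "tl vs ! i \<noteq> tl vs ! j"
    proof
      assume "tl vs ! i = tl vs ! j"
      then have "vs ! Suc i = vs ! Suc j" using h by (simp add: nth_tl)
      then show False using A[rule_format, of "Suc i" "Suc j"] A[rule_format, of "Suc j" "Suc i"] h assms by (cases "i < j") auto
    qed
  qed
  show "distinct (butlast vs) \<and> distinct (tl vs)" using 1 2 by simp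
next
  assume B: "distinct (butlast vs) \<and> distinct (tl vs)"
  show "\<forall>i j. i < j \<and> j < length vs \<and> vs ! i = vs ! j \<longrightarrow> i = 0 \<and> j = m"
  proof (intro allI impI)
    fix i j assume h: "i < j \<and> j < length vs \<and> vs ! i = vs ! j"
    have jm: "j = m"
    proof (rule ccontr)
      assume "j \<noteq> m"
      then have "j < length (butlast vs)" using h assms by simp
      then have "butlast vs ! i = butlast vs ! j" using h by (simp add: nth_butlast)
      then show False using B h \<open>j < length (butlast vs)\<close> by (simp add: nth_eq_iff_index_eq)
    qed
    have "i = 0"
    proof (rule ccontr)
      assume "i \<noteq> 0"
      then obtain i' where i': "i = Suc i'" by (cases i) auto
      obtain j' where j': "j = Suc j'" using h by (cases j) auto
      have "tl vs ! i' = tl vs ! j'" using h i' j' by (cases vs) auto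
      moreover have "j' < length (tl vs)" "i' < length (tl vs)" using h i' j' by auto
      ultimately show False using B h i' j' by (simp add: nth_eq_iff_index_eq)
    qed
    then show "i = 0 \<and> j = m" using jm by simp
  qed
qed

lemma hpath_alt:
  "hpath E vs es \<longleftrightarrow> wadj vs es \<and> distinct es \<and> set es \<subseteq> E \<and> distinct (butlast vs) \<and> distinct (tl vs)"
proof -
  have "length vs = length es + 1 \<Longrightarrow> (\<forall>i j. i < j \<and> j < length vs \<and> vs ! i = vs ! j \<longrightarrow> i = 0 \<and> j = length es)
     \<longleftrightarrow> distinct (butlast vs) \<and> distinct (tl vs)"
    using vdist_iff[of vs "length es"] by simp
  note eq = this
  show ?thesis
  proof (cases "length vs = length es + 1")
    case True
    show ?thesis unfolding hpath_def wadj_iff eq[OF True] using True by auto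
  next
    case False
    then show ?thesis unfolding hpath_def wadj_iff by auto
  qed
qed

definition opath :: "'v set set \<Rightarrow> 'v list \<Rightarrow> 'v set list \<Rightarrow> bool" where
  "opath E vs es \<longleftrightarrow> wadj vs es \<and> distinct es \<and> set es \<subseteq> E \<and> distinct vs"

lemma opath_hpath: "opath E vs es \<Longrightarrow> hpath E vs es"
  by (auto simp: opath_def hpath_alt distinct_butlast distinct_tl)

lemma opath_ne: "opath E vs es \<Longrightarrow> vs \<noteq> []"
  by (auto simp: opath_def wadj_ne)

lemma hpath_opath: "hpath E vs es \<Longrightarrow> hd vs \<noteq> last vs \<Longrightarrow> opath E vs es"
proof -
  assume h: "hpath E vs es" "hd vs \<noteq> last vs"
  have ne: "vs \<noteq> []" using h by (auto simp: hpath_def)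
  have "distinct vs"
    unfolding distinct_conv_nth
  proof (intro allI impI)
    fix i j assume ij: "i < length vs" "j < length vs" "i \<noteq> j"
    show "vs ! i \<noteq> vs ! j"
    proof
      assume eq: "vs ! i = vs ! j"
      have "(i = 0 \<and> j = length es) \<or> (j = 0 \<and> i = length es)"
        using h(1) ij eq unfolding hpath_def
        by (cases "i < j") (metis linorder_neqE_nat)+
      then show False using h ij eq ne by (auto simp: hd_conv_nth last_conv_nth hpath_def)
    qed
  qed
  then show ?thesis using h by (auto simp: opath_def hpath_alt)
qed

lemma opath_rev: "opath E vs es \<Longrightarrow> opath E (rev vs) (rev es)"
  by (auto simp: opath_def wadj_rev)

lemma opath_drop: "opath E vs es \<Longrightarrow> t \<le> length es \<Longrightarrow> opath E (drop t vs) (drop t es)"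
  by (auto simp: opath_def wadj_drop dest: in_set_dropD)

lemma opath_take: "opath E vs es \<Longrightarrow> t \<le> length es \<Longrightarrow> opath E (take (Suc t) vs) (take t es)"
  by (auto simp: opath_def wadj_take dest: in_set_takeD)

lemma opath_len: "opath E vs es \<Longrightarrow> length vs = Suc (length es)"
  by (auto simp: opath_def wadj_iff)

lemma opath_adj: "opath E vs es \<Longrightarrow> i < length es \<Longrightarrow> vs!i \<in> es!i \<and> vs!(Suc i) \<in> es!i"
  by (auto simp: opath_def wadj_iff)

lemma opath_sub:
  assumes "opath E vs es" "i \<le> j" "j \<le> length es"
  shows "opath E (take (Suc (j - i)) (drop i vs)) (take (j - i) (drop i es))"
proof -
  have "opath E (drop i vs) (drop i es)" using assms by (intro opath_drop) auto
  then show ?thesis using assms by (intro opath_take) auto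
qed

lemma in_set_take_drop:
  assumes "j \<le> length es" "i \<le> j"
  shows "x \<in> set (take (j - i) (drop i es)) \<longleftrightarrow> (\<exists>t. i \<le> t \<and> t < j \<and> es ! t = x)"
proof
  assume "x \<in> set (take (j - i) (drop i es))"
  then obtain t where "t < length (take (j - i) (drop i es))" "take (j - i) (drop i es) ! t = x"
    by (auto simp: in_set_conv_nth)
  then show "\<exists>t. i \<le> t \<and> t < j \<and> es ! t = x" using assms
    by (intro exI[of _ "i + t"]) auto
next
  assume "\<exists>t. i \<le> t \<and> t < j \<and> es ! t = x"
  then obtain t where t: "i \<le> t" "t < j" "es ! t = x" by blast
  then have "take (j - i) (drop i es) ! (t - i) = x" "t - i < length (take (j - i) (drop i es))"
    using assms by auto
  then show "x \<in> set (take (j - i) (drop i es))" by (metis nth_mem)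
qed

lemma in_set_drop_iff: "x \<in> set (drop n xs) \<longleftrightarrow> (\<exists>i. n \<le> i \<and> i < length xs \<and> xs ! i = x)"
proof
  assume "x \<in> set (drop n xs)"
  then obtain t where "t < length (drop n xs)" "drop n xs ! t = x" by (auto simp: in_set_conv_nth)
  then show "\<exists>i. n \<le> i \<and> i < length xs \<and> xs ! i = x" by (intro exI[of _ "n + t"]) auto
next
  assume "\<exists>i. n \<le> i \<and> i < length xs \<and> xs ! i = x"
  then obtain i where "n \<le> i" "i < length xs" "xs ! i = x" by blast
  then have "drop n xs ! (i - n) = x" "i - n < length (drop n xs)" by auto
  then show "x \<in> set (drop n xs)" by (metis nth_mem)
qed

lemma in_set_butlast_drop_iff:
  "x \<in> set (butlast (drop n xs)) \<longleftrightarrow> (\<exists>i. n \<le> i \<and> Suc i < length xs \<and> xs ! i = x)"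
  by (auto simp: butlast_drop in_set_drop_iff nth_butlast)

definition acyc :: "'v set set \<Rightarrow> bool" where
  "acyc E \<longleftrightarrow> \<not> (\<exists>vs es. hcycle E vs es)"

lemma close_cycle:
  assumes "opath E vs es" "es \<noteq> []" "f \<in> E" "f \<notin> set es" "hd vs \<in> f" "last vs \<in> f"
  shows "hcycle E (vs @ [hd vs]) (es @ [f])"
proof -
  have ne: "vs \<noteq> []" using assms opath_ne by blast
  have w: "wadj (vs @ tl [last vs, hd vs]) (es @ [f])"
    using assms by (intro wadj_append) (auto simp: opath_def)
  have d: "distinct (tl vs @ [hd vs])"
    using assms ne by (cases vs) (auto simp: opath_def)
  have t: "tl (vs @ [hd vs]) = tl vs @ [hd vs]" using ne by (cases vs) auto
  have "hpath E (vs @ [hd vs]) (es @ [f])"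
    using assms w d ne unfolding hpath_alt t by (auto simp: opath_def)
  then show ?thesis using assms ne by (auto simp: hcycle_def)
qed

lemma no_close:
  assumes "acyc E" "opath E vs es" "es \<noteq> []" "f \<in> E" "f \<notin> set es" "hd vs \<in> f" "last vs \<in> f"
  shows False
  using close_cycle[OF assms(2-)] assms(1) unfolding acyc_def by blast




lemma opath_sub_hd: "opath E vs es \<Longrightarrow> i \<le> j \<Longrightarrow> j \<le> length es \<Longrightarrow> hd (take (Suc (j - i)) (drop i vs)) = vs ! i"
  by (frule opath_len) (simp add: hd_drop_conv_nth hd_take)

lemma opath_sub_last: "opath E vs es \<Longrightarrow> i \<le> j \<Longrightarrow> j \<le> length es \<Longrightarrow> last (take (Suc (j - i)) (drop i vs)) = vs ! j"
  by (frule opath_len) (simp add: last_conv_nth)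

lemma chord:
  assumes ac: "acyc E" and P: "opath E vs es" and fE: "f \<in> E" and ij: "i < j" "j \<le> length es"
    and vi: "vs ! i \<in> f" and vj: "vs ! j \<in> f"
  shows "j = Suc i \<and> es ! i = f"
proof -
  have dE: "distinct es" using P by (simp add: opath_def)
  have cl: False if "a < b" "b \<le> length es" "vs ! a \<in> f" "vs ! b \<in> f"
      "\<forall>t. a \<le> t \<and> t < b \<longrightarrow> es ! t \<noteq> f" for a b
  proof -
    have S: "opath E (take (Suc (b - a)) (drop a vs)) (take (b - a) (drop a es))"
      using opath_sub[OF P, of a b] that by simp
    show False
    proof (rule no_close[OF ac S])
      show "take (b - a) (drop a es) \<noteq> []" using that by simp
      show "f \<notin> set (take (b - a) (drop a es))" using that in_set_take_drop[of b es a f] by auto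
      show "hd (take (Suc (b - a)) (drop a vs)) \<in> f" using that opath_sub_hd[OF P, of a b] by simp
      show "last (take (Suc (b - a)) (drop a vs)) \<in> f" using that opath_sub_last[OF P, of a b] by simp
    qed (rule fE)
  qed
  obtain c where c: "i \<le> c" "c < j" "es ! c = f" using cl[of i j] ij vi vj by blast
  have cc: "c = i"
  proof (rule ccontr)
    assume "c \<noteq> i"
    then have "i < c" using c by simp
    moreover have "vs ! c \<in> f" using opath_adj[OF P, of c] c ij by simp
    moreover have "\<forall>t. i \<le> t \<and> t < c \<longrightarrow> es ! t \<noteq> f"
      using c ij dE by (auto simp: nth_eq_iff_index_eq)
    ultimately show False using cl[of i c] c ij vi by simp
  qed
  have "j = Suc i"
  proof (rule ccontr)
    assume "j \<noteq> Suc i"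
    then have "Suc i < j" using ij by simp
    moreover have "vs ! Suc i \<in> f" using opath_adj[OF P, of i] c cc ij by simp
    moreover have "\<forall>t. Suc i \<le> t \<and> t < j \<longrightarrow> es ! t \<noteq> f"
      using c cc ij dE by (auto simp: nth_eq_iff_index_eq)
    ultimately show False using cl[of "Suc i" j] ij vj by simp
  qed
  then show ?thesis using c cc by simp
qed

lemma walk_to_path:
  "wadj vs es \<Longrightarrow> set es \<subseteq> E \<Longrightarrow> hd vs \<noteq> last vs \<Longrightarrow>
   \<exists>vs' es'. opath E vs' es' \<and> hd vs' = hd vs \<and> last vs' = last vs \<and> set es' \<subseteq> set es"
proof (induction "length vs" arbitrary: vs es rule: less_induct)
  case less
  have len: "length vs = Suc (length es)" using less.prems by (simp add: wadj_iff)
  show ?case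
  proof (cases "distinct vs \<and> distinct es")
    case True
    then show ?thesis using less.prems by (intro exI[of _ vs] exI[of _ es]) (auto simp: opath_def)
  next
    case False
    show ?thesis
    proof (cases "distinct vs")
      case False
      then obtain i j where ij: "i < j" "j < length vs" "vs ! i = vs ! j"
        by (metis distinct_conv_nth linorder_neqE_nat)
      define vs' where "vs' = take (Suc i) vs @ tl (drop j vs)"
      define es' where "es' = take i es @ drop j es"
      have w1: "wadj (take (Suc i) vs) (take i es)" using less.prems ij len by (intro wadj_take) auto
      have w2: "wadj (drop j vs) (drop j es)" using less.prems ij len by (intro wadj_drop) auto
      have lt: "last (take (Suc i) vs) = vs ! i" using ij(1,2) by (simp add: take_Suc_conv_app_nth)
      have hd2: "hd (drop j vs) = vs ! j" using ij by (simp add: hd_drop_conv_nth)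
      have w: "wadj vs' es'" unfolding vs'_def es'_def
        by (rule wadj_append[OF w1 w2]) (simp add: lt hd2 ij)
      have "length vs' < length vs" unfolding vs'_def using ij by simp
      moreover have "set es' \<subseteq> E" unfolding es'_def using less.prems
        by (auto dest: in_set_takeD in_set_dropD)
      moreover have "hd vs' = hd vs" unfolding vs'_def using ij by (cases vs) auto
      moreover have "last vs' = last vs" unfolding vs'_def
        using last_append_tl[of "take (Suc i) vs" "drop j vs"] ij lt hd2 by (cases vs) auto
      ultimately obtain vs'' es'' where r: "opath E vs'' es''" "hd vs'' = hd vs" "last vs'' = last vs"
        "set es'' \<subseteq> set es'"
        using less.hyps[of vs' es'] w less.prems by metis
      moreover have "set es' \<subseteq> set es" unfolding es'_def by (auto dest: in_set_takeD in_set_dropD)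
      ultimately show ?thesis by blast
    next
      case dv: True
      then have "\<not> distinct es" using False by simp
      then obtain i j where ij: "i < j" "j < length es" "es ! i = es ! j"
        by (metis distinct_conv_nth linorder_neqE_nat)
      define f where "f = es ! i"
      define vs' where "vs' = take (Suc i) vs @ tl (vs ! i # drop (Suc j) vs)"
      define es' where "es' = take i es @ (f # drop (Suc j) es)"
      have w1: "wadj (take (Suc i) vs) (take i es)" using less.prems ij len by (intro wadj_take) auto
      have dsj: "drop (Suc j) vs = vs ! Suc j # drop (Suc (Suc j)) vs" using ij len
        by (simp add: Cons_nth_drop_Suc)
      have w3: "wadj (drop (Suc j) vs) (drop (Suc j) es)" using less.prems ij len by (intro wadj_drop) auto
      have a1: "vs ! i \<in> f" "vs ! Suc j \<in> f" using less.prems ij unfolding wadj_iff f_def by auto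
      have w2: "wadj (vs ! i # drop (Suc j) vs) (f # drop (Suc j) es)"
        using w3 a1 by (subst dsj, subst (asm) dsj) simp
      have lt: "last (take (Suc i) vs) = vs ! i" using ij len by (simp add: take_Suc_conv_app_nth)
      have w: "wadj vs' es'" unfolding vs'_def es'_def
        by (rule wadj_append[OF w1 w2]) (simp add: lt)
      have "length vs' < length vs" unfolding vs'_def using ij len by simp
      moreover have ses: "set es' \<subseteq> set es" unfolding es'_def f_def using ij
        by (auto dest: in_set_takeD in_set_dropD)
      moreover have "hd vs' = hd vs" unfolding vs'_def using ij by (cases vs) auto
      moreover have "last vs' = last vs" unfolding vs'_def
        using ij len by (simp add: last_append)
      ultimately obtain vs'' es'' where r: "opath E vs'' es''" "hd vs'' = hd vs" "last vs'' = last vs"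
        "set es'' \<subseteq> set es'"
        using less.hyps[of vs' es'] w less.prems by (metis order_trans)
      then show ?thesis using ses by blast
    qed
  qed
qed




lemma opath_hd_last_eq:
  assumes "opath E vs es" "hd vs = last vs" shows "es = [] \<and> vs = [hd vs]"
proof -
  have len: "length vs = Suc (length es)" and d: "distinct vs" using assms opath_len by (auto simp: opath_def)
  have "es = []"
  proof (rule ccontr)
    assume "es \<noteq> []"
    then have "0 < length vs - 1" "length vs - 1 < length vs" using len by auto
    moreover have "vs ! 0 = vs ! (length vs - 1)" using assms len
      by (metis hd_conv_nth last_conv_nth list.size(3) nat.distinct(1))
    ultimately show False using d len nth_eq_iff_index_eq[of vs 0 "length vs - 1"] by auto
  qed
  then show ?thesis using len by (cases vs) auto
qed

lemma path_unique_first: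
  assumes ac: "acyc E"
    and IH: "\<And>vs' es' ys' gs'. length es' + length gs' < length es + length gs \<Longrightarrow> opath E vs' es' \<Longrightarrow>
             opath E ys' gs' \<Longrightarrow> hd vs' = hd ys' \<Longrightarrow> last vs' = last ys' \<Longrightarrow> vs' = ys' \<and> es' = gs'"
    and P: "opath E vs es" and Q: "opath E ys gs" and h: "hd vs = hd ys" and l: "last vs = last ys"
    and ne: "es \<noteq> []" "gs \<noteq> []" and fe: "hd es = hd gs"
  shows "vs = ys \<and> es = gs"
proof -
  obtain f er where es: "es = f # er" using ne by (cases es) auto
  obtain gr where gs: "gs = f # gr" using ne fe es by (cases gs) auto
  obtain u v1 vr where vs: "vs = u # v1 # vr" using opath_len[OF P] es
    by (metis Suc_length_conv)
  obtain y1 yr where ys: "ys = u # y1 # yr" using opath_len[OF Q] gs h vs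
    by (metis Suc_length_conv list.sel(1))
  have Pw: "u \<in> f" "v1 \<in> f" "wadj (v1 # vr) er" using P vs es by (auto simp: opath_def)
  have Qw: "y1 \<in> f" "wadj (y1 # yr) gr" using Q ys gs by (auto simp: opath_def)
  have Pt: "opath E (v1 # vr) er" using P vs es by (auto simp: opath_def)
  have Qt: "opath E (y1 # yr) gr" using Q ys gs by (auto simp: opath_def)
  show ?thesis
  proof (cases "v1 \<in> set ys")
    case True
    then obtain c where c: "c < length ys" "ys ! c = v1" by (auto simp: in_set_conv_nth)
    have "c \<noteq> 0" using c P vs ys by (cases c) (auto simp: opath_def)
    have fE: "f \<in> E" using P es by (auto simp: opath_def)
    have "ys ! 0 \<in> f" "ys ! c \<in> f" using Pw ys c by auto
    moreover have "c \<le> length gs" using c opath_len[OF Q] by simp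
    ultimately have "c = Suc 0"
      using chord[OF ac Q fE, of 0 c] \<open>c \<noteq> 0\<close> by simp
    then have v1: "v1 = y1" using c ys by simp
    have "v1 # vr = y1 # yr \<and> er = gr"
      by (rule IH) (use Pt Qt v1 l vs ys es gs in auto)
    then show ?thesis using vs ys es gs by simp
  next
    case False
    have Qs: "opath E (v1 # y1 # yr) (f # gr)"
      using Q ys gs False Pw by (auto simp: opath_def)
    have "v1 # vr = v1 # y1 # yr \<and> er = f # gr"
      by (rule IH) (use Pt Qs l vs ys es gs in auto)
    then show ?thesis using P es by (auto simp: opath_def)
  qed
qed

lemma path_unique:
  assumes ac: "acyc E"
  shows "opath E vs es \<Longrightarrow> opath E ys gs \<Longrightarrow> hd vs = hd ys \<Longrightarrow> last vs = last ys \<Longrightarrow> vs = ys \<and> es = gs"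
proof (induction "length es + length gs" arbitrary: vs es ys gs rule: less_induct)
  case less
  note P = less.prems(1) and Q = less.prems(2) and h = less.prems(3) and l = less.prems(4)
  have lenP: "length vs = Suc (length es)" using P by (rule opath_len)
  have lenQ: "length ys = Suc (length gs)" using Q by (rule opath_len)
  have dP: "distinct vs" "distinct es" "set es \<subseteq> E" using P by (auto simp: opath_def)
  have dQ: "distinct ys" "distinct gs" "set gs \<subseteq> E" using Q by (auto simp: opath_def)
  show ?case
  proof (cases "es = [] \<or> gs = []")
    case True
    then show ?thesis
    proof
      assume "es = []"
      then have "vs = [hd vs]" using lenP by (cases vs) auto
      then have "hd ys = last ys" using h l by (metis last_ConsL list.sel(1))
      then show ?thesis using opath_hd_last_eq[OF Q] \<open>es = []\<close> \<open>vs = [hd vs]\<close> h by auto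
    next
      assume "gs = []"
      then have "ys = [hd ys]" using lenQ by (cases ys) auto
      then have "hd vs = last vs" using h l by (metis last_ConsL list.sel(1))
      then show ?thesis using opath_hd_last_eq[OF P] \<open>gs = []\<close> \<open>ys = [hd ys]\<close> h by auto
    qed
  next
    case False
    then have ne: "es \<noteq> []" "gs \<noteq> []" by auto
    note IH = less.hyps
    show ?thesis
    proof (cases "\<exists>i j. 0 < i \<and> i < length es \<and> 0 < j \<and> j < length gs \<and> vs ! i = ys ! j")
      case True
      then obtain i j where ij: "0 < i" "i < length es" "0 < j" "j < length gs" "vs ! i = ys ! j" by blast
      have P1: "opath E (take (Suc i) vs) (take i es)" using P ij by (intro opath_take) auto
      have Q1: "opath E (take (Suc j) ys) (take j gs)" using Q ij by (intro opath_take) auto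
      have r1: "take (Suc i) vs = take (Suc j) ys \<and> take i es = take j gs"
      proof (rule IH)
        show "length (take i es) + length (take j gs) < length es + length gs" using ij by simp
        show "hd (take (Suc i) vs) = hd (take (Suc j) ys)" using h lenP lenQ
          by (cases vs; cases ys) auto
        show "last (take (Suc i) vs) = last (take (Suc j) ys)" using ij lenP lenQ
          by (simp add: take_Suc_conv_app_nth)
      qed (use P1 Q1 in auto)
      have "length (take (Suc i) vs) = length (take (Suc j) ys)" using r1 by simp
      then have "i = j" using ij lenP lenQ by simp
      have P2: "opath E (drop i vs) (drop i es)" using P ij by (intro opath_drop) auto
      have Q2: "opath E (drop j ys) (drop j gs)" using Q ij by (intro opath_drop) auto
      have r2: "drop i vs = drop j ys \<and> drop i es = drop j gs"
      proof (rule IH)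
        show "length (drop i es) + length (drop j gs) < length es + length gs" using ij by simp
        show "hd (drop i vs) = hd (drop j ys)" using ij lenP lenQ by (simp add: hd_drop_conv_nth)
        show "last (drop i vs) = last (drop j ys)" using ij lenP lenQ l by simp
      qed (use P2 Q2 in auto)
      have "take i vs = take i ys" using r1 \<open>i = j\<close> by (metis take_take min_absorb1 le_SucI order_refl)
      moreover have "take i es = take i gs" using r1 \<open>i = j\<close> by simp
      ultimately show ?thesis using r2 \<open>i = j\<close> by (metis append_take_drop_id)
    next
      case noint: False
      show ?thesis
      proof (cases "hd es = hd gs")
        case True
        show ?thesis by (rule path_unique_first[OF ac IH P Q h l ne True]) auto
      next
        case hdne: False
        show ?thesis
        proof (cases "last es = last gs")
          case True
          have "rev vs = rev ys \<and> rev es = rev gs"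
          proof (rule path_unique_first[OF ac])
            show "opath E (rev vs) (rev es)" "opath E (rev ys) (rev gs)" using P Q by (auto intro: opath_rev)
            show "hd (rev vs) = hd (rev ys)" "last (rev vs) = last (rev ys)" using h l ne lenP lenQ
              by (auto simp: hd_rev last_rev)
            show "rev es \<noteq> []" "rev gs \<noteq> []" using ne by auto
            show "hd (rev es) = hd (rev gs)" using True by (simp add: hd_rev)
          qed (use IH in auto)
          then show ?thesis by simp
        next
          case lastne: False
          have noint': False if "0 < i" "i < length es" "0 < j" "j < length gs" "vs ! i = ys ! j" for i j
            using noint that by blast
          have nev: "vs \<noteq> []" "ys \<noteq> []" using lenP lenQ by auto
          have e0: "vs ! 0 = ys ! 0" using h nev by (simp add: hd_conv_nth)
          have eL: "vs ! length es = ys ! length gs" using l nev lenP lenQ by (simp add: last_conv_nth)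
          have vq: False if vi: "i < length vs" "0 < j" "j < length gs" "vs ! i = ys ! j" for i j
          proof -
            consider "i = 0" | "i = length es" | "0 < i \<and> i < length es" using vi(1) lenP by linarith
            then show False
            proof cases
              case 1
              then have "ys ! 0 = ys ! j" using vi e0 by simp
              then show False using vi dQ lenQ nth_eq_iff_index_eq[of ys 0 j] by simp
            next
              case 2
              then have "ys ! length gs = ys ! j" using vi eL by simp
              then show False using vi dQ lenQ nth_eq_iff_index_eq[of ys "length gs" j] by simp
            next
              case 3
              then show False using noint' vi by blast
            qed
          qed
          show ?thesis
          proof (cases "set es \<inter> set gs = {}")
            case True
            define R where "R = vs @ tl (rev (tl ys))"
            define RE where "RE = es @ rev (tl gs)"
            have Qt: "opath E (tl ys) (tl gs)" using opath_drop[OF Q, of 1] ne by (cases gs) (auto simp: drop_Suc)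
            have Qtr: "opath E (rev (tl ys)) (rev (tl gs))" using Qt by (rule opath_rev)
            have tne: "tl ys \<noteq> []" using lenQ ne by (cases ys) auto
            have lv: "last vs = hd (rev (tl ys))" using l tne by (simp add: hd_rev last_tl)
            have w: "wadj R RE" unfolding R_def RE_def
              using wadj_append[of vs es "rev (tl ys)" "rev (tl gs)"] P Qtr lv by (auto simp: opath_def)
            have tlr: "tl (rev (tl ys)) = rev (butlast (tl ys))"
              by (metis butlast_rev rev_rev_ident)
            have dis: "set vs \<inter> set (butlast (tl ys)) = {}"
            proof (rule ccontr)
              assume "set vs \<inter> set (butlast (tl ys)) \<noteq> {}"
              then obtain x where x: "x \<in> set vs" "x \<in> set (butlast (drop 1 ys))" by (auto simp: drop_Suc)
              obtain i where "i < length vs" "vs ! i = x" using x by (auto simp: in_set_conv_nth)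
              moreover obtain j where "1 \<le> j" "Suc j < length ys" "ys ! j = x"
                using x in_set_butlast_drop_iff by metis
              ultimately show False using vq[of i j] lenQ by auto
            qed
            have Ro: "opath E R RE" unfolding opath_def
            proof (intro conjI)
              show "wadj R RE" by (rule w)
              show "distinct RE" unfolding RE_def using dP dQ True ne
                by (cases gs) auto
              show "set RE \<subseteq> E" unfolding RE_def using dP dQ by (cases gs) auto
              show "distinct R" unfolding R_def tlr using dP dQ dis
                by (auto simp: distinct_butlast distinct_tl)
            qed
            have g: "hd gs \<in> E" "hd gs \<notin> set RE" unfolding RE_def
              using dQ True ne by (cases gs; auto)+
            have hR: "hd R \<in> hd gs" unfolding R_def hd_append2[OF nev(1)]
              using opath_adj[OF Q, of 0] e0 nev ne by (simp add: hd_append2 hd_conv_nth[symmetric])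
            have lR: "last R = ys ! 1"
            proof -
              have "last R = last (rev (tl ys))" unfolding R_def
                using last_append_tl[of vs "rev (tl ys)"] lv opath_ne[OF P] tne by simp
              also have "\<dots> = hd (tl ys)" by (simp add: last_rev)
              also have "\<dots> = ys ! 1" using tne by (cases ys) (auto simp: hd_conv_nth)
              finally show ?thesis .
            qed
            have "ys ! 1 \<in> hd gs" using opath_adj[OF Q, of 0] ne by (simp add: hd_conv_nth)
            then show ?thesis
              using no_close[OF ac Ro _ g(1) g(2) hR] lR ne unfolding RE_def by simp
          next
            case False
            define B where "B = {b. b < length gs \<and> gs ! b \<in> set es}"
            have Bne: "B \<noteq> {}" using False unfolding B_def by (auto simp: in_set_conv_nth) (metis)
            have Bf: "finite B" unfolding B_def by simp
            define b where "b = Max B"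
            have bB: "b \<in> B" using Bne Bf b_def by simp
            have bmax: "b' \<le> b" if "b' \<in> B" for b' using that Bf b_def by simp
            obtain a where a: "a < length es" "es ! a = gs ! b" using bB unfolding B_def by (auto simp: in_set_conv_nth)
            have bl: "b < length gs" using bB B_def by simp
            define f where "f = gs ! b"
            define R where "R = drop (Suc a) vs @ tl (rev (drop (Suc b) ys))"
            define RE where "RE = drop (Suc a) es @ rev (drop (Suc b) gs)"
            have P2: "opath E (drop (Suc a) vs) (drop (Suc a) es)" using P a by (intro opath_drop) auto
            have Q2: "opath E (rev (drop (Suc b) ys)) (rev (drop (Suc b) gs))" using Q bl
              by (intro opath_rev opath_drop) auto
            have ln: "last (drop (Suc a) vs) = hd (rev (drop (Suc b) ys))" using a bl lenP lenQ l
              by (simp add: hd_rev)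
            have w: "wadj R RE" unfolding R_def RE_def
              using wadj_append[of "drop (Suc a) vs" "drop (Suc a) es" "rev (drop (Suc b) ys)" "rev (drop (Suc b) gs)"]
                P2 Q2 ln by (auto simp: opath_def)
            have tlr: "tl (rev (drop (Suc b) ys)) = rev (butlast (drop (Suc b) ys))"
              by (metis butlast_rev rev_rev_ident)
            have dis: "set (drop (Suc a) vs) \<inter> set (butlast (drop (Suc b) ys)) = {}"
            proof (rule ccontr)
              assume "set (drop (Suc a) vs) \<inter> set (butlast (drop (Suc b) ys)) \<noteq> {}"
              then obtain x where x: "x \<in> set (drop (Suc a) vs)" "x \<in> set (butlast (drop (Suc b) ys))" by auto
              obtain i where "i < length vs" "vs ! i = x" using x by (auto simp: in_set_drop_iff)
              moreover obtain j where "Suc b \<le> j" "Suc j < length ys" "ys ! j = x"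
                using x in_set_butlast_drop_iff by metis
              ultimately show False using vq[of i j] lenQ by auto
            qed
            have disE: "set (drop (Suc a) es) \<inter> set (drop (Suc b) gs) = {}"
            proof (rule ccontr)
              assume "set (drop (Suc a) es) \<inter> set (drop (Suc b) gs) \<noteq> {}"
              then obtain x where x: "x \<in> set (drop (Suc a) es)" "x \<in> set (drop (Suc b) gs)" by auto
              obtain j where "Suc b \<le> j" "j < length gs" "gs ! j = x" using x by (auto simp: in_set_drop_iff)
              moreover have "x \<in> set es" using x by (auto dest: in_set_dropD)
              ultimately have "j \<in> B" unfolding B_def by simp
              then show False using bmax \<open>Suc b \<le> j\<close> by fastforce
            qed
            have Ro: "opath E R RE" unfolding opath_def
            proof (intro conjI)
              show "wadj R RE" by (rule w)
              show "distinct RE" unfolding RE_def using dP dQ disE by auto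
              show "set RE \<subseteq> E" unfolding RE_def using dP dQ by (auto dest: in_set_dropD)
              show "distinct R" unfolding R_def tlr using dP dQ dis
                by (auto simp: distinct_butlast)
            qed
            have fE: "f \<in> E" using dQ bl f_def by auto
            have fnot: "f \<notin> set RE"
            proof
              assume "f \<in> set RE"
              then consider "f \<in> set (drop (Suc a) es)" | "f \<in> set (drop (Suc b) gs)" unfolding RE_def by auto
              then show False
              proof cases
                case 1
                then obtain t where "Suc a \<le> t" "t < length es" "es ! t = f" by (auto simp: in_set_drop_iff)
                then show False using a f_def dP nth_eq_iff_index_eq[of es a t] by simp
              next
                case 2
                then obtain t where "Suc b \<le> t" "t < length gs" "gs ! t = f" by (auto simp: in_set_drop_iff)
                then show False using bl f_def dQ nth_eq_iff_index_eq[of gs b t] by simp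
              qed
            qed
            have REne: "RE \<noteq> []"
            proof
              assume "RE = []"
              then have "Suc a = length es" "Suc b = length gs" unfolding RE_def using a bl by auto
              then have "last es = last gs" using a ne last_conv_nth[of es] last_conv_nth[of gs] by (metis diff_Suc_1)
              then show False using lastne by simp
            qed
            have hR: "hd R \<in> f" unfolding R_def f_def
              using opath_adj[OF P, of a] a lenP by (simp add: hd_drop_conv_nth)
            have lR: "last R \<in> f"
            proof -
              have "last R = last (rev (drop (Suc b) ys))" unfolding R_def
                using last_append_tl[of "drop (Suc a) vs" "rev (drop (Suc b) ys)"] ln a bl lenP lenQ by simp
              also have "\<dots> = ys ! Suc b" using bl lenQ by (simp add: last_rev hd_drop_conv_nth)
              finally show ?thesis using opath_adj[OF Q, of b] bl f_def by simp
            qed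
            show ?thesis using no_close[OF ac Ro REne fE fnot hR lR] by simp
          qed
        qed
      qed
    qed
  qed
qed




locale htree =
  fixes V :: "'v set" and E :: "'v set set" and e :: "nat \<Rightarrow> 'v set" and k :: nat
  assumes ht: "hypertree V E" and Ee: "E = e ` {1..k}" and inje: "inj_on e {1..k}"
begin

lemma acycE: "acyc E" using ht by (auto simp: hypertree_def acyc_def)
lemma finV: "finite V" using ht by (auto simp: hypertree_def hypergraph_def)
lemma EV: "f \<in> E \<Longrightarrow> f \<subseteq> V" using ht by (auto simp: hypertree_def hypergraph_def)
lemma cardE: "f \<in> E \<Longrightarrow> card f > 1" using ht by (auto simp: hypertree_def hypergraph_def)
lemma finE: "f \<in> E \<Longrightarrow> finite f" using EV finV finite_subset by blast

definition Pth :: "'v \<Rightarrow> 'v \<Rightarrow> 'v list \<times> 'v set list" where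
  "Pth a b = (THE p. hpath E (fst p) (snd p) \<and> hd (fst p) = a \<and> last (fst p) = b)"

lemma pth_eq:
  assumes "opath E vs es" "hd vs = a" "last vs = b" "a \<noteq> b"
  shows "Pth a b = (vs, es)"
  unfolding Pth_def
proof (rule the1_equality)
  show "\<exists>!p. hpath E (fst p) (snd p) \<and> hd (fst p) = a \<and> last (fst p) = b"
  proof (rule ex1I[of _ "(vs, es)"])
    show "hpath E (fst (vs, es)) (snd (vs, es)) \<and> hd (fst (vs, es)) = a \<and> last (fst (vs, es)) = b"
      using assms opath_hpath by auto
    fix p assume p: "hpath E (fst p) (snd p) \<and> hd (fst p) = a \<and> last (fst p) = b"
    then have "opath E (fst p) (snd p)" using assms hpath_opath by metis
    then have "fst p = vs \<and> snd p = es" using path_unique[OF acycE] p assms by metis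
    then show "p = (vs, es)" by (simp add: prod_eq_iff)
  qed
qed (use assms opath_hpath in auto)

lemma pth:
  assumes "a \<in> V" "b \<in> V" "a \<noteq> b"
  shows "opath E (fst (Pth a b)) (snd (Pth a b)) \<and> hd (fst (Pth a b)) = a \<and> last (fst (Pth a b)) = b"
proof -
  have "\<exists>vs es. hpath E vs es \<and> hd vs = a \<and> last vs = b"
    using ht assms unfolding hypertree_def hconnected_def by blast
  then obtain vs es where "hpath E vs es" "hd vs = a" "last vs = b" by blast
  then have o: "opath E vs es" using hpath_opath assms by metis
  then have "Pth a b = (vs, es)" using pth_eq \<open>hd vs = a\<close> \<open>last vs = b\<close> assms by metis
  then show ?thesis using o \<open>hd vs = a\<close> \<open>last vs = b\<close> by simp
qed

definition idx :: "'v set \<Rightarrow> nat" where "idx g = (THE j. j \<in> {1..k} \<and> e j = g)"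

lemma idx_e: "j \<in> {1..k} \<Longrightarrow> idx (e j) = j"
  unfolding idx_def by (rule the_equality) (use inje in \<open>auto dest: inj_onD\<close>)

lemma idx: "g \<in> E \<Longrightarrow> idx g \<in> {1..k} \<and> e (idx g) = g"
  using Ee idx_e by auto

definition JXY :: "'v \<Rightarrow> 'v \<Rightarrow> nat \<times> 'v \<times> 'v" where
  "JXY a b = (let (vs, es) = Pth a b; r = (ARG_MIN (\<lambda>t. idx (es ! t)) t. t < length es)
              in (idx (es ! r), vs ! r, vs ! Suc r))"

definition "J a b = fst (JXY a b)"
definition "X a b = fst (snd (JXY a b))"
definition "Y a b = snd (snd (JXY a b))"

lemma JXY_prop:
  assumes "a \<in> V" "b \<in> V" "a \<noteq> b"
  obtains r where "r < length (snd (Pth a b))" "J a b = idx (snd (Pth a b) ! r)"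
    "X a b = fst (Pth a b) ! r" "Y a b = fst (Pth a b) ! Suc r"
    "\<forall>t<length (snd (Pth a b)). idx (snd (Pth a b) ! r) \<le> idx (snd (Pth a b) ! t)"
proof -
  obtain vs es where P: "Pth a b = (vs, es)" by (cases "Pth a b")
  have o: "opath E vs es" "hd vs = a" "last vs = b" using pth[OF assms] P by auto
  have "es \<noteq> []"
  proof
    assume "es = []"
    then have "length vs = 1" using opath_len[OF o(1)] by simp
    then obtain x where "vs = [x]" by (metis One_nat_def length_0_conv length_Suc_conv)
    then show False using o assms by simp
  qed
  then have ne: "0 < length es" by simp
  define r where "r = (ARG_MIN (\<lambda>t. idx (es ! t)) t. t < length es)"
  have r: "r < length es" "\<forall>t. t < length es \<longrightarrow> idx (es ! r) \<le> idx (es ! t)"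
    using arg_min_nat_lemma[of "\<lambda>t. t < length es" 0 "\<lambda>t. idx (es ! t)"] ne unfolding r_def by auto
  have "JXY a b = (idx (es ! r), vs ! r, vs ! Suc r)" unfolding JXY_def P r_def by (simp add: Let_def)
  then show ?thesis using that[of r] r P by (simp add: J_def X_def Y_def)
qed

definition good :: "'v set \<Rightarrow> 'v \<Rightarrow> 'v \<Rightarrow> bool" where
  "good f a z \<longleftrightarrow> z \<in> f \<and> (z = a \<or> f \<notin> set (snd (Pth a z)))"

lemma no_walk:
  assumes "f \<in> E" "wadj ws fs" "set fs \<subseteq> E" "f \<notin> set fs" "hd ws \<in> f" "last ws \<in> f"
  shows "hd ws = last ws"
proof (rule ccontr)
  assume ne: "hd ws \<noteq> last ws"
  obtain vs' es' where r: "opath E vs' es'" "hd vs' = hd ws" "last vs' = last ws" "set es' \<subseteq> set fs"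
    using walk_to_path[OF assms(2,3) ne] by blast
  have "opath E [hd ws, last ws] [f]" using assms ne by (auto simp: opath_def)
  then have "es' = [f]" using path_unique[OF acycE r(1)] r by fastforce
  then show False using r assms by auto
qed

lemma walk_good:
  assumes "f \<in> E" "a \<in> V" "good f a z"
  shows "\<exists>ws fs. wadj ws fs \<and> set fs \<subseteq> E \<and> f \<notin> set fs \<and> hd ws = a \<and> last ws = z"
proof (cases "z = a")
  case True
  then show ?thesis by (intro exI[of _ "[a]"] exI[of _ "[]"]) simp
next
  case False
  have "z \<in> V" using assms EV by (auto simp: good_def)
  then have o: "opath E (fst (Pth a z)) (snd (Pth a z))" "hd (fst (Pth a z)) = a" "last (fst (Pth a z)) = z"
    using pth assms False by metis+
  then show ?thesis using assms False
    by (intro exI[of _ "fst (Pth a z)"] exI[of _ "snd (Pth a z)"]) (auto simp: opath_def good_def)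
qed

lemma walk_join:
  assumes "wadj ws1 fs1" "wadj ws2 fs2" "hd ws1 = hd ws2"
  shows "wadj (rev ws1 @ tl ws2) (rev fs1 @ fs2) \<and> hd (rev ws1 @ tl ws2) = last ws1
     \<and> last (rev ws1 @ tl ws2) = last ws2"
proof -
  have ne: "ws1 \<noteq> []" "ws2 \<noteq> []" using assms wadj_ne by auto
  have "wadj (rev ws1 @ tl ws2) (rev fs1 @ fs2)"
    using assms by (intro wadj_append wadj_rev) (auto simp: last_rev)
  moreover have "last (rev ws1 @ tl ws2) = last ws2"
    using last_append_tl[of "rev ws1" ws2] ne assms by (simp add: last_rev)
  ultimately show ?thesis using ne by (simp add: hd_rev)
qed

lemma good_unique:
  assumes "f \<in> E" "a \<in> V" "good f a z1" "good f a z2"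
  shows "z1 = z2"
proof -
  obtain ws1 fs1 where w1: "wadj ws1 fs1" "set fs1 \<subseteq> E" "f \<notin> set fs1" "hd ws1 = a" "last ws1 = z1"
    using walk_good[OF assms(1,2,3)] by blast
  obtain ws2 fs2 where w2: "wadj ws2 fs2" "set fs2 \<subseteq> E" "f \<notin> set fs2" "hd ws2 = a" "last ws2 = z2"
    using walk_good[OF assms(1,2,4)] by blast
  have j: "wadj (rev ws1 @ tl ws2) (rev fs1 @ fs2)" "hd (rev ws1 @ tl ws2) = z1" "last (rev ws1 @ tl ws2) = z2"
    using walk_join[OF w1(1) w2(1)] w1 w2 by auto
  show ?thesis using no_walk[OF assms(1) j(1)] j w1 w2 assms by (auto simp: good_def)
qed

lemma good_path:
  assumes "a \<in> V" "b \<in> V" "a \<noteq> b" "Pth a b = (vs, es)" "t < length es"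
  shows "good (es ! t) a (vs ! t) \<and> good (es ! t) b (vs ! Suc t)"
proof -
  have o: "opath E vs es" "hd vs = a" "last vs = b" using pth[OF assms(1-3)] assms(4) by auto
  have len: "length vs = Suc (length es)" using o opath_len by blast
  have adj: "vs ! t \<in> es ! t" "vs ! Suc t \<in> es ! t" using opath_adj[OF o(1) assms(5)] by auto
  have dE: "distinct es" "distinct vs" using o by (auto simp: opath_def)
  have g1: "good (es ! t) a (vs ! t)"
  proof (cases "vs ! t = a")
    case True then show ?thesis using adj by (simp add: good_def)
  next
    case False
    have "Pth a (vs ! t) = (take (Suc t) vs, take t es)"
    proof -
      have h1: "hd (take (Suc t) vs) = a" using o by simp
      have l1: "last (take (Suc t) vs) = vs ! t" using assms len by (simp add: take_Suc_conv_app_nth)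
      show ?thesis using pth_eq[OF opath_take[OF o(1), of t] h1 l1] assms False len by simp
    qed
    moreover have "es ! t \<notin> set (take t es)"
      using dE assms by (auto simp: in_set_conv_nth nth_eq_iff_index_eq)
    ultimately show ?thesis using adj by (simp add: good_def)
  qed
  have g2: "good (es ! t) b (vs ! Suc t)"
  proof (cases "vs ! Suc t = b")
    case True then show ?thesis using adj by (simp add: good_def)
  next
    case False
    have "Pth b (vs ! Suc t) = (rev (drop (Suc t) vs), rev (drop (Suc t) es))"
      by (rule pth_eq[OF opath_rev[OF opath_drop[OF o(1), of "Suc t"]]])
        (use assms False o len in \<open>auto simp: hd_rev last_rev hd_drop_conv_nth\<close>)
    moreover have "es ! t \<notin> set (drop (Suc t) es)"
      using dE assms by (auto simp: in_set_drop_iff nth_eq_iff_index_eq)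
    ultimately show ?thesis using adj by (simp add: good_def)
  qed
  show ?thesis using g1 g2 by simp
qed

lemma good_exists:
  assumes "f \<in> E" "a \<in> V" shows "\<exists>z. good f a z"
proof (cases "a \<in> f")
  case True then show ?thesis by (auto simp: good_def)
next
  case False
  have "f \<noteq> {}" using cardE[OF assms(1)] by auto
  then obtain z' where z': "z' \<in> f" by blast
  then have zV: "z' \<in> V" "z' \<noteq> a" using EV assms False by auto
  obtain vs es where P: "Pth a z' = (vs, es)" by (cases "Pth a z'")
  show ?thesis
  proof (cases "f \<in> set es")
    case True
    then obtain t where "t < length es" "es ! t = f" by (auto simp: in_set_conv_nth)
    then show ?thesis using good_path[OF assms(2) zV(1) zV(2)[symmetric] P] by metis
  next
    case False
    then show ?thesis using P z' by (intro exI[of _ z']) (simp add: good_def)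
  qed
qed

definition proj :: "'v set \<Rightarrow> 'v \<Rightarrow> 'v" where "proj f a = (THE z. good f a z)"

lemma proj_eq: "f \<in> E \<Longrightarrow> a \<in> V \<Longrightarrow> good f a z \<Longrightarrow> proj f a = z"
  unfolding proj_def by (rule the_equality) (auto intro: good_unique)

lemma proj_good: "f \<in> E \<Longrightarrow> a \<in> V \<Longrightarrow> good f a (proj f a)"
  using good_exists proj_eq by metis

lemma proj_same:
  assumes "a \<in> V" "b \<in> V" "a \<noteq> b" "f \<in> E" "f \<notin> set (snd (Pth a b))"
  shows "proj f a = proj f b"
proof -
  obtain ws1 fs1 where w1: "wadj ws1 fs1" "set fs1 \<subseteq> E" "f \<notin> set fs1" "hd ws1 = a" "last ws1 = proj f a"
    using walk_good[OF assms(4,1) proj_good[OF assms(4,1)]] by blast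
  obtain ws2 fs2 where w2: "wadj ws2 fs2" "set fs2 \<subseteq> E" "f \<notin> set fs2" "hd ws2 = b" "last ws2 = proj f b"
    using walk_good[OF assms(4,2) proj_good[OF assms(4,2)]] by blast
  obtain vs es where P: "Pth a b = (vs, es)" by (cases "Pth a b")
  have o: "opath E vs es" "hd vs = a" "last vs = b" using pth[OF assms(1-3)] P by auto
  have j1: "wadj (rev ws1 @ tl vs) (rev fs1 @ es)" "hd (rev ws1 @ tl vs) = proj f a"
    "last (rev ws1 @ tl vs) = b"
    using walk_join[OF w1(1), of vs es] o w1 by (auto simp: opath_def)
  have ne: "rev ws1 @ tl vs \<noteq> []" using w1 wadj_ne by auto
  have j2: "wadj ((rev ws1 @ tl vs) @ tl ws2) ((rev fs1 @ es) @ fs2)"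
    using wadj_append[OF j1(1) w2(1)] j1 w2 by simp
  have hl1: "hd ((rev ws1 @ tl vs) @ tl ws2) = proj f a" using j1(2) by (simp only: hd_append2[OF ne])
  have lh: "last (rev ws1 @ tl vs) = hd ws2" using j1(3) w2(4) by simp
  have hl2: "last ((rev ws1 @ tl vs) @ tl ws2) = proj f b"
    using last_append_tl[OF ne wadj_ne[OF w2(1)] lh] w2(5) by (simp only:)
  note hl = hl1 hl2
  have "f \<notin> set ((rev fs1 @ es) @ fs2)" using assms P w1 w2 by auto
  moreover have "set ((rev fs1 @ es) @ fs2) \<subseteq> E" using w1 w2 o by (auto simp: opath_def)
  moreover have "proj f a \<in> f" "proj f b \<in> f"
    using proj_good[OF assms(4,1)] proj_good[OF assms(4,2)] by (auto simp: good_def)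
  ultimately show ?thesis using no_walk[OF assms(4) j2] hl by auto
qed

lemma XY_proj:
  assumes "a \<in> V" "b \<in> V" "a \<noteq> b"
  shows "J a b \<in> {1..k} \<and> e (J a b) \<in> set (snd (Pth a b)) \<and> X a b = proj (e (J a b)) a
    \<and> Y a b = proj (e (J a b)) b \<and> X a b \<noteq> Y a b \<and> X a b \<in> e (J a b) \<and> Y a b \<in> e (J a b)
    \<and> (\<forall>g\<in>set (snd (Pth a b)). J a b \<le> idx g)"
proof -
  obtain vs es where P: "Pth a b = (vs, es)" by (cases "Pth a b")
  have o: "opath E vs es" "hd vs = a" "last vs = b" using pth[OF assms] P by auto
  obtain r where r: "r < length es" "J a b = idx (es ! r)" "X a b = vs ! r" "Y a b = vs ! Suc r"
    "\<forall>t<length es. idx (es ! r) \<le> idx (es ! t)"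
    using JXY_prop[OF assms] P by auto
  have esE: "es ! r \<in> E" using o r by (auto simp: opath_def)
  have Je: "J a b \<in> {1..k}" "e (J a b) = es ! r" using idx[OF esE] r by auto
  have g: "good (es ! r) a (vs ! r)" "good (es ! r) b (vs ! Suc r)" using good_path[OF assms P r(1)] by auto
  have "X a b \<noteq> Y a b" using o r opath_len[OF o(1)] by (auto simp: opath_def nth_eq_iff_index_eq)
  moreover have "\<forall>g\<in>set es. J a b \<le> idx g" using r by (auto simp: in_set_conv_nth)
  ultimately show ?thesis using Je g r P esE proj_eq[OF esE assms(1) g(1)] proj_eq[OF esE assms(2) g(2)]
    by (auto simp: good_def)
qed

lemma J_sym:
  assumes "a \<in> V" "b \<in> V" "a \<noteq> b"
  shows "J b a = J a b \<and> X b a = Y a b \<and> Y b a = X a b"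
proof -
  obtain vs es where P: "Pth a b = (vs, es)" by (cases "Pth a b")
  have o: "opath E vs es" "hd vs = a" "last vs = b" using pth[OF assms] P by auto
  have "Pth b a = (rev vs, rev es)"
    using pth_eq[OF opath_rev[OF o(1)]] o assms by (simp add: hd_rev last_rev)
  then have s: "set (snd (Pth b a)) = set (snd (Pth a b))" using P by simp
  have A: "J a b \<le> J b a" using XY_proj[OF assms] XY_proj[OF assms(2,1) assms(3)[symmetric]] s
    idx_e by metis
  have B: "J b a \<le> J a b" using XY_proj[OF assms] XY_proj[OF assms(2,1) assms(3)[symmetric]] s
    idx_e by metis
  have "J b a = J a b" using A B by simp
  then show ?thesis using XY_proj[OF assms] XY_proj[OF assms(2,1) assms(3)[symmetric]] by simp
qed

lemma J_edge:
  assumes "j \<in> {1..k}" "a \<in> e j" "b \<in> e j" "a \<noteq> b"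
  shows "J a b = j \<and> X a b = a \<and> Y a b = b"
proof -
  have ejE: "e j \<in> E" using Ee assms by auto
  have ab: "a \<in> V" "b \<in> V" using EV[OF ejE] assms by auto
  have "opath E [a, b] [e j]" using assms ejE by (auto simp: opath_def)
  then have P: "Pth a b = ([a, b], [e j])" using pth_eq assms by fastforce
  have "e (J a b) = e j" using XY_proj[OF ab assms(4)] P by simp
  then have Jj: "J a b = j" using inje assms XY_proj[OF ab assms(4)] by (auto dest: inj_onD)
  have "good (e j) a a" "good (e j) b b" using assms by (auto simp: good_def)
  then show ?thesis using XY_proj[OF ab assms(4)] Jj proj_eq[OF ejE ab(1)] proj_eq[OF ejE ab(2)] by simp
qed

lemma trans3:
  fixes L :: "nat \<Rightarrow> 'v \<Rightarrow> 'v \<Rightarrow> bool"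
  assumes V: "u \<in> V" "v \<in> V" "w \<in> V" "u \<noteq> v" "v \<noteq> w" "u \<noteq> w"
    and Ltr: "\<And>j x y z. L j x y \<Longrightarrow> L j y z \<Longrightarrow> L j x z" and Lirr: "\<And>j x. \<not> L j x x"
    and 1: "L (J u v) (X u v) (Y u v)" and 2: "L (J v w) (X v w) (Y v w)"
  shows "L (J u w) (X u w) (Y u w)"
proof -
  define m where "m = min (J u v) (min (J v w) (J u w))"
  have mcases: "m = J u v \<or> m = J v w \<or> m = J u w" unfolding m_def by linarith
  have mle: "m \<le> J u v" "m \<le> J v w" "m \<le> J u w" unfolding m_def by auto
  define f where "f = e m"
  have fE: "f \<in> E" using mcases XY_proj V Ee f_def by (metis image_eqI)
  have pair: "(J a b = m \<longrightarrow> X a b = proj f a \<and> Y a b = proj f b \<and> proj f a \<noteq> proj f b)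
      \<and> (J a b \<noteq> m \<longrightarrow> proj f a = proj f b)"
    if ab: "a \<in> V" "b \<in> V" "a \<noteq> b" "m \<le> J a b" for a b
  proof (rule conjI; rule impI)
    assume "J a b = m"
    then show "X a b = proj f a \<and> Y a b = proj f b \<and> proj f a \<noteq> proj f b"
      using XY_proj[OF ab(1-3)] f_def by auto
  next
    assume ne: "J a b \<noteq> m"
    have "f \<notin> set (snd (Pth a b))"
    proof
      assume "f \<in> set (snd (Pth a b))"
      then have "J a b \<le> idx f" using XY_proj[OF ab(1-3)] by blast
      moreover have "idx f = m" using f_def idx_e mcases XY_proj V by metis
      ultimately show False using ne ab by simp
    qed
    then show "proj f a = proj f b" using proj_same ab fE by blast
  qed
  note p1 = pair[OF V(1,2,4) mle(1)] and p2 = pair[OF V(2,3,5) mle(2)] and p3 = pair[OF V(1,3,6) mle(3)]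
  show ?thesis
  proof (cases "J u w = m")
    case True
    then show ?thesis using 1 2 p1 p2 p3 mcases Ltr by metis
  next
    case False
    then have "proj f u = proj f w" using p3 by blast
    then show ?thesis using 1 2 p1 p2 mcases Ltr Lirr False by metis
  qed
qed

end




definition lexl :: "(nat \<Rightarrow> nat) \<Rightarrow> (nat \<Rightarrow> nat) \<Rightarrow> bool" where
  "lexl f g \<longleftrightarrow> (\<exists>m. f m < g m \<and> (\<forall>l<m. f l = g l))"

lemma lexl_irrefl: "\<not> lexl f f" by (auto simp: lexl_def)

lemma lexl_trans:
  assumes "lexl f g" "lexl g h" shows "lexl f h"
proof -
  obtain m1 where m1: "f m1 < g m1" "\<forall>l<m1. f l = g l" using assms(1) by (auto simp: lexl_def)
  obtain m2 where m2: "g m2 < h m2" "\<forall>l<m2. g l = h l" using assms(2) by (auto simp: lexl_def)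
  consider "m1 < m2" | "m2 < m1" | "m1 = m2" by linarith
  then show ?thesis
  proof cases
    case 1 then show ?thesis using m1 m2 unfolding lexl_def by (intro exI[of _ m1]) auto
  next
    case 2 then show ?thesis using m1 m2 unfolding lexl_def by (intro exI[of _ m2]) auto
  next
    case 3 then show ?thesis using m1 m2 unfolding lexl_def by (intro exI[of _ m1]) auto
  qed
qed

lemma lexl_asym: "lexl f g \<Longrightarrow> \<not> lexl g f"
  using lexl_trans lexl_irrefl by blast

lemma lexl_total:
  assumes "f \<noteq> g" shows "lexl f g \<or> lexl g f"
proof -
  have ex: "\<exists>m. f m \<noteq> g m" using assms by auto
  define m where "m = (LEAST m. f m \<noteq> g m)"
  have "f m \<noteq> g m" using LeastI_ex[OF ex] m_def by simp
  moreover have "\<forall>l<m. f l = g l" using not_less_Least m_def by blast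
  ultimately show ?thesis unfolding lexl_def by (metis linorder_neqE_nat)
qed

lemma lexl_head: "lexl f g \<Longrightarrow> f 0 \<le> g 0"
  unfolding lexl_def by (metis less_imp_le_nat not_gr_zero order_refl)

lemma lexl_shift:
  assumes "lexl f g" "f 0 = g 0" shows "lexl (\<lambda>m. f (Suc m)) (\<lambda>m. g (Suc m))"
proof -
  obtain m where m: "f m < g m" "\<forall>l<m. f l = g l" using assms(1) by (auto simp: lexl_def)
  then have "m \<noteq> 0" using assms(2) by (cases m) auto
  then obtain m' where "m = Suc m'" by (cases m) auto
  then show ?thesis using m unfolding lexl_def by (intro exI[of _ m']) auto
qed

lemma funpow_in: "g permutes F \<Longrightarrow> x \<in> F \<Longrightarrow> (g ^^ n) x \<in> F"
  by (induction n) (auto simp: permutes_in_image)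

lemma cyc_orbit:
  assumes cyc: "cyclic_perm g F" and x: "x \<in> F"
  shows "orbit g x = F"
proof
  have p: "g permutes F" using cyc by (simp add: cyclic_perm_def)
  show "orbit g x \<subseteq> F" using p x by (auto simp: orbit_altdef funpow_in)
  show "F \<subseteq> orbit g x"
  proof
    fix z assume z: "z \<in> F"
    obtain m where m: "(g ^^ m) x = z" using cyc x z by (auto simp: cyclic_perm_def)
    show "z \<in> orbit g x"
    proof (cases m)
      case (Suc m') then show ?thesis using m unfolding orbit_altdef by (intro CollectI exI[of _ m]) simp
    next
      case 0
      have "g x \<in> F" using p x by (simp add: permutes_in_image)
      then obtain m' where "(g ^^ m') (g x) = x" using cyc x by (auto simp: cyclic_perm_def)
      then have "(g ^^ Suc m') x = x" by (simp only: funpow_Suc_right comp_apply)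
      then show ?thesis using m 0 unfolding orbit_altdef by (metis (mono_tags, lifting) mem_Collect_eq zero_less_Suc funpow_0)
    qed
  qed
qed

lemma prime_word:
  assumes cyc: "cyclic_perm g F" and fin: "finite F" and pr: "prime (card F)"
    and xy: "x \<in> F" "y \<in> F" "x \<noteq> y" and nc: "\<exists>u\<in>F. \<exists>w\<in>F. \<chi> u \<noteq> \<chi> w"
  shows "\<exists>m. \<chi> ((g ^^ Suc m) x) \<noteq> \<chi> ((g ^^ Suc m) y)"
proof (rule ccontr)
  assume "\<not> ?thesis"
  then have H: "\<And>m. \<chi> ((g ^^ Suc m) x) = \<chi> ((g ^^ Suc m) y)" by blast
  have orb: "orbit g x = F" by (rule cyc_orbit[OF cyc xy(1)])
  have xo: "x \<in> orbit g x" using orb xy by simp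
  define N where "N = funpow_dist1 g x x"
  have gN: "(g ^^ N) x = x" unfolding N_def using funpow_dist1_prop[OF xo] .
  have "card (orbit g x) = N"
    unfolding N_def orbit_conv_funpow_dist1[OF xo] using inj_on_funpow_dist1[OF xo]
    by (simp add: card_image)
  then have cN: "card F = N" using orb by simp
  obtain d where d: "(g ^^ d) x = y" using cyc xy by (auto simp: cyclic_perm_def)
  define h where "h t = \<chi> ((g ^^ t) x)" for t
  have P1: "h (t + N * q) = h t" for t q
  proof (induction q)
    case (Suc q)
    have e1: "t + N * Suc q = (t + N * q) + N" by simp
    have "(g ^^ (t + N * Suc q)) x = (g ^^ (t + N * q)) ((g ^^ N) x)"
      unfolding e1 by (simp only: funpow_add comp_apply)
    then show ?case using Suc gN by (simp add: h_def)
  qed simp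
  have P2: "h (Suc t + d * q) = h (Suc t)" for t q
  proof (induction q)
    case (Suc q)
    have e1: "Suc t + d * Suc q = Suc (t + d * q) + d" by simp
    have "(g ^^ (Suc t + d * Suc q)) x = (g ^^ Suc (t + d * q)) ((g ^^ d) x)"
      unfolding e1 by (simp only: funpow_add comp_apply)
    then have "h (Suc t + d * Suc q) = h (Suc (t + d * q))" using H d unfolding h_def by simp
    then show ?case using Suc by simp
  qed simp
  have "d mod N \<noteq> 0"
  proof
    assume "d mod N = 0"
    then have "(g ^^ d) x = x" using funpow_mod_eq[where f=g and n=N and x=x and m=d] gN by simp
    then show False using d xy by simp
  qed
  then have nd: "\<not> N dvd d" "d \<noteq> 0" by (auto simp: dvd_eq_mod_eq_0) (cases d; simp)
  have "coprime N d" using pr cN nd by (simp add: prime_imp_coprime)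
  then have g1: "gcd d N = 1" by (simp add: coprime_iff_gcd_eq_1 gcd.commute)
  obtain a b where ab: "d * a = N * b + 1" using bezout_nat[OF nd(2), of N] g1 by auto
  have step: "h (Suc (Suc t)) = h (Suc t)" for t
  proof -
    have "h (Suc t) = h (Suc t + d * a)" using P2 by simp
    also have "\<dots> = h (Suc (Suc t) + N * b)" using ab by (simp add: algebra_simps)
    also have "\<dots> = h (Suc (Suc t))" using P1[of "Suc (Suc t)" b] by simp
    finally show ?thesis by simp
  qed
  have const: "h (Suc t) = h 1" for t by (induction t) (use step in auto)
  have "\<chi> z = h 1" if zF: "z \<in> F" for z
  proof -
    obtain m where "0 < m" "(g ^^ m) x = z" using zF orb by (auto simp: orbit_altdef)
    then show ?thesis using const[of "m - 1"] unfolding h_def by simp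
  qed
  then show False using nc by metis
qed




locale htree2 = htree V E e k for V :: "'v set" and E e k +
  fixes c :: "nat \<Rightarrow> 'v \<Rightarrow> 'v"
  assumes primeE: "\<forall>f\<in>E. prime (card f)"
    and cycc: "\<forall>i\<in>{1..k}. cyclic_perm (c i) (e i)"
begin

lemma ejE: "j \<in> {1..k} \<Longrightarrow> e j \<in> E" using Ee by auto
lemma cperm: "j \<in> {1..k} \<Longrightarrow> c j permutes e j" using cycc by (simp add: cyclic_perm_def)
lemma c_in: "j \<in> {1..k} \<Longrightarrow> x \<in> e j \<Longrightarrow> c j x \<in> e j" using cperm permutes_in_image by metis
lemma c_inj: "j \<in> {1..k} \<Longrightarrow> x \<noteq> y \<Longrightarrow> c j x \<noteq> c j y"
  using cperm permutes_inj by (metis injD)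
lemma cpow_in: "j \<in> {1..k} \<Longrightarrow> x \<in> e j \<Longrightarrow> (c j ^^ m) x \<in> e j" using funpow_in cperm by metis
lemma ejV: "j \<in> {1..k} \<Longrightarrow> e j \<subseteq> V" using EV ejE by blast

lemma Hdes:
  "i \<in> H_descents V E e k c \<pi> \<longleftrightarrow> i \<in> {1..<card V} \<and>
     \<pi> (c (J (inv_into V \<pi> i) (inv_into V \<pi> (i+1))) (X (inv_into V \<pi> i) (inv_into V \<pi> (i+1))))
     > \<pi> (c (J (inv_into V \<pi> i) (inv_into V \<pi> (i+1))) (Y (inv_into V \<pi> i) (inv_into V \<pi> (i+1))))"
  unfolding H_descents_def J_def X_def Y_def JXY_def Pth_def idx_def
  by (simp add: Let_def case_prod_beta)

definition PiS :: "('v \<Rightarrow> nat) set" where "PiS = {\<pi> \<in> V \<rightarrow>\<^sub>E {1..card V}. bij_betw \<pi> V {1..card V}}"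
definition FS :: "(nat \<Rightarrow> nat) \<Rightarrow> ('v \<Rightarrow> nat) \<Rightarrow> (nat \<Rightarrow> nat) set" where "FS \<alpha> \<pi> = {s \<in> {1..card V} \<rightarrow>\<^sub>E UNIV.
      (\<forall>j\<in>{1..card V}. s j \<ge> 1) \<and>
      (\<forall>j. 1 \<le> j \<and> j < card V \<longrightarrow> s j \<le> s (j+1) \<and> (j \<in> H_descents V E e k c \<pi> \<longrightarrow> s j < s (j+1))) \<and>
      (\<forall>a. card {j\<in>{1..card V}. s j = a} = \<alpha> a)}"
definition XS :: "(nat \<Rightarrow> nat) \<Rightarrow> ('v \<Rightarrow> nat) set" where "XS \<alpha> = {\<chi> \<in> V \<rightarrow>\<^sub>E UNIV.
      (\<forall>v\<in>V. \<chi> v \<ge> 1) \<and> (\<forall>f\<in>E. \<exists>u\<in>f. \<exists>w\<in>f. \<chi> u \<noteq> \<chi> w) \<and>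
      (\<forall>a. card {v\<in>V. \<chi> v = a} = \<alpha> a)}"

definition Rp :: "('v \<Rightarrow> nat) \<Rightarrow> 'v \<Rightarrow> 'v \<Rightarrow> bool" where "Rp \<pi> a b \<longleftrightarrow> \<pi> (c (J a b) (X a b)) < \<pi> (c (J a b) (Y a b))"
definition word :: "('v \<Rightarrow> nat) \<Rightarrow> nat \<Rightarrow> 'v \<Rightarrow> nat \<Rightarrow> nat" where "word \<chi> j x = (\<lambda>m. \<chi> ((c j ^^ Suc m) x))"
definition prec :: "('v \<Rightarrow> nat) \<Rightarrow> 'v \<Rightarrow> 'v \<Rightarrow> bool" where "prec \<chi> a b \<longleftrightarrow> \<chi> a < \<chi> b \<or>
   (\<chi> a = \<chi> b \<and> a \<noteq> b \<and> lexl (word \<chi> (J a b) (X a b)) (word \<chi> (J a b) (Y a b)))"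
definition proper :: "('v \<Rightarrow> nat) \<Rightarrow> bool" where "proper \<chi> \<longleftrightarrow> (\<forall>f\<in>E. \<exists>u\<in>f. \<exists>w\<in>f. \<chi> u \<noteq> \<chi> w)"

lemma pi_facts:
  assumes "\<pi> \<in> PiS"
  shows "inj_on \<pi> V" "\<And>v. v \<in> V \<Longrightarrow> \<pi> v \<in> {1..card V}"
    "\<And>i. i \<in> {1..card V} \<Longrightarrow> inv_into V \<pi> i \<in> V \<and> \<pi> (inv_into V \<pi> i) = i"
    "\<And>v. v \<in> V \<Longrightarrow> inv_into V \<pi> (\<pi> v) = v"
    "\<pi> ` V = {1..card V}"
proof -
  have b: "bij_betw \<pi> V {1..card V}" using assms by (simp add: PiS_def)
  show i: "inj_on \<pi> V" using b bij_betw_imp_inj_on by blast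
  show im: "\<pi> ` V = {1..card V}" using b bij_betw_imp_surj_on by blast
  show "\<And>v. v \<in> V \<Longrightarrow> \<pi> v \<in> {1..card V}" using im by blast
  show "\<And>i. i \<in> {1..card V} \<Longrightarrow> inv_into V \<pi> i \<in> V \<and> \<pi> (inv_into V \<pi> i) = i"
    using im by (metis f_inv_into_f inv_into_into)
  show "\<And>v. v \<in> V \<Longrightarrow> inv_into V \<pi> (\<pi> v) = v" using i by (simp add: inv_into_f_f)
qed

lemma s_mono:
  assumes "s \<in> FS \<alpha> \<pi>" "1 \<le> i" "i \<le> j" "j \<le> card V"
  shows "s i \<le> s j"
  using assms(3,4)
proof (induction j)
  case 0 then show ?case using assms(2) by simp
next
  case (Suc j)
  show ?case
  proof (cases "i = Suc j")
    case False
    then have "i \<le> j" using Suc by simp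
    then have "s i \<le> s j" using Suc by simp
    moreover have "s j \<le> s (Suc j)" using assms(1) Suc \<open>i \<le> j\<close> assms(2) unfolding FS_def by auto
    ultimately show ?thesis by simp
  qed simp
qed

lemma consec_R:
  assumes pi: "\<pi> \<in> PiS" and s: "s \<in> FS \<alpha> \<pi>" and ab: "a \<in> V" "b \<in> V"
    and nx: "\<pi> b = Suc (\<pi> a)" and col: "s (\<pi> a) = s (\<pi> b)"
  shows "Rp \<pi> a b"
proof -
  note pf = pi_facts[OF pi]
  define i where "i = \<pi> a"
  have i1: "1 \<le> i" "i < card V" using pf(2)[OF ab(1)] pf(2)[OF ab(2)] nx i_def by auto
  have "i \<notin> H_descents V E e k c \<pi>" using s i1 col nx unfolding FS_def i_def by auto
  moreover have "inv_into V \<pi> i = a" "inv_into V \<pi> (i+1) = b" using pf(4)[OF ab(1)] pf(4)[OF ab(2)] nx i_def by auto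
  ultimately have le: "\<not> \<pi> (c (J a b) (X a b)) > \<pi> (c (J a b) (Y a b))" using Hdes i1 by auto
  have abne: "a \<noteq> b" using nx by auto
  note xy = XY_proj[OF ab abne]
  have "c (J a b) (X a b) \<noteq> c (J a b) (Y a b)" using xy c_inj by blast
  moreover have "c (J a b) (X a b) \<in> V" "c (J a b) (Y a b) \<in> V" using xy c_in ejV by blast+
  ultimately have "\<pi> (c (J a b) (X a b)) \<noteq> \<pi> (c (J a b) (Y a b))" using pf(1) by (meson inj_onD)
  then show ?thesis using le by (simp add: Rp_def)
qed

lemma Rp_trans:
  assumes pi: "\<pi> \<in> PiS" and V: "u \<in> V" "v \<in> V" "w \<in> V" "u \<noteq> v" "v \<noteq> w" "u \<noteq> w"
    and "Rp \<pi> u v" "Rp \<pi> v w"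
  shows "Rp \<pi> u w"
  using trans3[OF V, of "\<lambda>j x y. \<pi> (c j x) < \<pi> (c j y)"] assms unfolding Rp_def by auto

lemma block:
  assumes pi: "\<pi> \<in> PiS" and s: "s \<in> FS \<alpha> \<pi>"
  shows "a \<in> V \<Longrightarrow> b \<in> V \<Longrightarrow> \<pi> b = \<pi> a + Suc d \<Longrightarrow> s (\<pi> a) = s (\<pi> b) \<Longrightarrow> Rp \<pi> a b"
proof (induction d arbitrary: a)
  case 0
  then show ?case using consec_R[OF pi s] by simp
next
  case (Suc d)
  note pf = pi_facts[OF pi]
  define w where "w = inv_into V \<pi> (Suc (\<pi> a))"
  have ra: "1 \<le> \<pi> a" "\<pi> b \<le> card V" using pf(2)[OF Suc.prems(1)] pf(2)[OF Suc.prems(2)] by auto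
  have w: "w \<in> V" "\<pi> w = Suc (\<pi> a)" using pf(3)[of "Suc (\<pi> a)"] Suc.prems ra unfolding w_def by auto
  have c1: "s (\<pi> a) \<le> s (\<pi> w)" "s (\<pi> w) \<le> s (\<pi> b)"
    using s_mono[OF s, of "\<pi> a" "\<pi> w"] s_mono[OF s, of "\<pi> w" "\<pi> b"] ra w Suc.prems(3) by auto
  have cw: "s (\<pi> a) = s (\<pi> w)" "s (\<pi> w) = s (\<pi> b)" using c1 Suc.prems by auto
  have r1: "Rp \<pi> a w" using consec_R[OF pi s Suc.prems(1) w(1) w(2) cw(1)] .
  have r2: "Rp \<pi> w b" using Suc.IH[OF w(1) Suc.prems(2)] w cw Suc.prems by simp
  have d: "a \<noteq> w" "w \<noteq> b" "a \<noteq> b" using w Suc.prems by auto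
  show ?case using Rp_trans[OF pi Suc.prems(1) w(1) Suc.prems(2) d r1 r2] .
qed

lemma block':
  assumes pi: "\<pi> \<in> PiS" and s: "s \<in> FS \<alpha> \<pi>" and "a \<in> V" "b \<in> V" "\<pi> a < \<pi> b" "s (\<pi> a) = s (\<pi> b)"
  shows "Rp \<pi> a b"
proof -
  obtain d where d: "\<pi> b = \<pi> a + Suc d" using less_imp_Suc_add[OF assms(5)] by (metis add_Suc_right)
  show ?thesis by (rule block[OF pi s assms(3) assms(4) d assms(6)])
qed

lemma Rp_edge:
  assumes "j \<in> {1..k}" "x \<in> e j" "y \<in> e j" "x \<noteq> y"
  shows "Rp \<pi> x y \<longleftrightarrow> \<pi> (c j x) < \<pi> (c j y)"
  using J_edge[OF assms] by (simp add: Rp_def)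

lemma chi_proper:
  assumes pi: "\<pi> \<in> PiS" and s: "s \<in> FS \<alpha> \<pi>"
  shows "proper (\<lambda>v. s (\<pi> v))"
  unfolding proper_def
proof (rule ccontr)
  note pf = pi_facts[OF pi]
  assume "\<not> (\<forall>f\<in>E. \<exists>u\<in>f. \<exists>w\<in>f. s (\<pi> u) \<noteq> s (\<pi> w))"
  then obtain f where f: "f \<in> E" "\<And>u w. u \<in> f \<Longrightarrow> w \<in> f \<Longrightarrow> s (\<pi> u) = s (\<pi> w)" by blast
  obtain j where j: "j \<in> {1..k}" "f = e j" using f Ee by auto
  have "card f > 1" using cardE f by simp
  then have "\<not> card f \<le> Suc 0" by simp
  then obtain a b where ab: "a \<in> f" "b \<in> f" "a \<noteq> b"
    using card_le_Suc0_iff_eq[OF finE[OF f(1)]] by blast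
  have fV: "f \<subseteq> V" using EV f by simp
  have "\<pi> a \<noteq> \<pi> b" using pf(1) ab fV by (meson inj_onD subsetD)
  then obtain a0 b0 where ab0: "a0 \<in> f" "b0 \<in> f" "\<pi> a0 < \<pi> b0"
    using ab by (metis linorder_neqE_nat)
  have cl: "\<pi> ((c j ^^ t) a0) < \<pi> ((c j ^^ t) b0)" for t
  proof (induction t)
    case 0 then show ?case using ab0 by simp
  next
    case (Suc t)
    define x where "x = (c j ^^ t) a0"
    define y where "y = (c j ^^ t) b0"
    have xy: "x \<in> e j" "y \<in> e j" using cpow_in j ab0 unfolding x_def y_def by auto
    have xyV: "x \<in> V" "y \<in> V" using xy ejV j by auto
    have lt: "\<pi> x < \<pi> y" using Suc.IH unfolding x_def y_def .
    have col: "s (\<pi> x) = s (\<pi> y)" using xy j(2) by (intro f(2)) auto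
    have "x \<noteq> y" using lt by auto
    have "Rp \<pi> x y" by (rule block'[OF pi s xyV lt col])
    then have "\<pi> (c j x) < \<pi> (c j y)" using Rp_edge[OF j(1) xy \<open>x \<noteq> y\<close>] by simp
    then show ?case unfolding x_def y_def by simp
  qed
  have "cyclic_perm (c j) (e j)" using cycc j by blast
  then obtain d where d: "(c j ^^ d) a0 = b0" using j ab0 unfolding cyclic_perm_def by blast
  define \<sigma> where "\<sigma> q = \<pi> ((c j ^^ (d * q)) a0)" for q
  have inc: "\<sigma> q < \<sigma> (Suc q)" for q
  proof -
    have e1: "d * Suc q = d * q + d" by simp
    have "(c j ^^ (d * Suc q)) a0 = (c j ^^ (d * q)) b0" unfolding e1 d[symmetric]
      by (simp only: funpow_add comp_apply)
    then show ?thesis using cl[of "d * q"] unfolding \<sigma>_def by simp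
  qed
  have ge: "q \<le> \<sigma> q" for q
  proof (induction q)
    case (Suc q) then show ?case using inc[of q] by simp
  qed simp
  have "\<sigma> q \<le> card V" for q
    using pf(2)[of "(c j ^^ (d * q)) a0"] cpow_in[OF j(1)] ab0 j ejV unfolding \<sigma>_def by auto
  then show False using ge[of "Suc (card V)"] by (meson not_less_eq_eq)
qed

end




context htree2 begin

lemma word_c: "word \<chi> j (c j x) = (\<lambda>m. word \<chi> j x (Suc m))"
  unfolding word_def by (simp only: funpow_Suc_right comp_apply)

lemma word0: "word \<chi> j x 0 = \<chi> (c j x)" unfolding word_def by simp

lemma words_differ:
  assumes pr: "proper \<chi>" and ab: "a \<in> V" "b \<in> V" "a \<noteq> b"
  shows "word \<chi> (J a b) (X a b) \<noteq> word \<chi> (J a b) (Y a b)"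
proof -
  note xy = XY_proj[OF ab]
  have "\<exists>u\<in>e (J a b). \<exists>w\<in>e (J a b). \<chi> u \<noteq> \<chi> w" using pr ejE xy unfolding proper_def by blast
  moreover have "cyclic_perm (c (J a b)) (e (J a b))" using cycc xy by blast
  moreover have "prime (card (e (J a b)))" using primeE ejE xy by blast
  ultimately obtain m where "\<chi> ((c (J a b) ^^ Suc m) (X a b)) \<noteq> \<chi> ((c (J a b) ^^ Suc m) (Y a b))"
    using prime_word[of "c (J a b)" "e (J a b)" "X a b" "Y a b" \<chi>] finE ejE xy by blast
  then show ?thesis unfolding word_def by metis
qed

lemma prec_irrefl: "\<not> prec \<chi> a a" by (simp add: prec_def)

lemma prec_asym:
  assumes ab: "a \<in> V" "b \<in> V" and p: "prec \<chi> a b" shows "\<not> prec \<chi> b a"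
proof
  assume q: "prec \<chi> b a"
  have "a \<noteq> b" using p prec_irrefl by metis
  note s = J_sym[OF ab this]
  show False using p q s lexl_asym unfolding prec_def by auto
qed

lemma prec_trans:
  assumes V: "a \<in> V" "b \<in> V" "d \<in> V" and p: "prec \<chi> a b" "prec \<chi> b d" shows "prec \<chi> a d"
proof (cases "\<chi> a = \<chi> b \<and> \<chi> b = \<chi> d")
  case False
  then show ?thesis using p unfolding prec_def by auto
next
  case True
  have ne: "a \<noteq> b" "b \<noteq> d" using p prec_irrefl by metis+
  have "a \<noteq> d" using prec_asym[OF V(1,2) p(1)] p(2) by auto
  have "lexl (word \<chi> (J a d) (X a d)) (word \<chi> (J a d) (Y a d))"
    using trans3[OF V ne \<open>a \<noteq> d\<close>, of "\<lambda>j x y. lexl (word \<chi> j x) (word \<chi> j y)"] p True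
      lexl_trans lexl_irrefl unfolding prec_def by auto
  then show ?thesis using True \<open>a \<noteq> d\<close> unfolding prec_def by auto
qed

lemma prec_total:
  assumes pr: "proper \<chi>" and ab: "a \<in> V" "b \<in> V" "a \<noteq> b"
  shows "prec \<chi> a b \<or> prec \<chi> b a"
proof (cases "\<chi> a = \<chi> b")
  case False then show ?thesis unfolding prec_def by auto
next
  case True
  note s = J_sym[OF ab]
  have "lexl (word \<chi> (J a b) (X a b)) (word \<chi> (J a b) (Y a b)) \<or>
        lexl (word \<chi> (J a b) (Y a b)) (word \<chi> (J a b) (X a b))"
    using lexl_total words_differ[OF pr ab] by blast
  then show ?thesis using True s ab unfolding prec_def by auto
qed

lemma prec_cong:
  assumes ab: "a \<in> V" "b \<in> V" and eq: "\<And>v. v \<in> V \<Longrightarrow> \<chi> v = \<chi>' v"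
  shows "prec \<chi> a b \<longleftrightarrow> prec \<chi>' a b"
proof (cases "a = b")
  case True then show ?thesis by (simp add: prec_def)
next
  case False
  note xy = XY_proj[OF ab False]
  have "word \<chi> (J a b) z = word \<chi>' (J a b) z" if "z \<in> e (J a b)" for z
    unfolding word_def using eq cpow_in[OF _ that] xy ejV by (metis subsetD)
  then show ?thesis using xy ab eq unfolding prec_def by auto
qed

lemma ord:
  assumes pi: "\<pi> \<in> PiS" and s: "s \<in> FS \<alpha> \<pi>" and ab: "a \<in> V" "b \<in> V" and lt: "\<pi> a < \<pi> b"
  shows "prec (\<lambda>v. s (\<pi> v)) a b"
proof -
  note pf = pi_facts[OF pi]
  define \<chi> where "\<chi> = (\<lambda>v. s (\<pi> v))"
  have pr: "proper \<chi>" using chi_proper[OF pi s] \<chi>_def by simp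
  have mono: "\<chi> x \<le> \<chi> y" if "x \<in> V" "y \<in> V" "\<pi> x < \<pi> y" for x y
    using s_mono[OF s, of "\<pi> x" "\<pi> y"] pf(2)[OF that(1)] pf(2)[OF that(2)] that(3) \<chi>_def by auto
  have abne: "a \<noteq> b" using lt by auto
  show ?thesis
  proof (cases "\<chi> a = \<chi> b")
    case False
    then show ?thesis using mono[OF ab lt] unfolding prec_def \<chi>_def by auto
  next
    case True
    have R: "Rp \<pi> a b" using block'[OF pi s ab lt] True \<chi>_def by simp
    note xy = XY_proj[OF ab abne]
    define j where "j = J a b"
    define x where "x = X a b"
    define y where "y = Y a b"
    have j: "j \<in> {1..k}" "x \<in> e j" "y \<in> e j" "x \<noteq> y" using xy j_def x_def y_def by auto
    have cl: "(\<forall>l<m. word \<chi> j x l = word \<chi> j y l) \<longrightarrow> \<pi> ((c j ^^ Suc m) x) < \<pi> ((c j ^^ Suc m) y)" for m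
    proof (induction m)
      case 0
      then show ?case using R unfolding Rp_def j_def x_def y_def by simp
    next
      case (Suc m)
      show ?case
      proof
        assume H: "\<forall>l<Suc m. word \<chi> j x l = word \<chi> j y l"
        define x' where "x' = (c j ^^ Suc m) x"
        define y' where "y' = (c j ^^ Suc m) y"
        have lt': "\<pi> x' < \<pi> y'" using Suc H unfolding x'_def y'_def by auto
        have xy': "x' \<in> e j" "y' \<in> e j" unfolding x'_def y'_def
          using cpow_in[OF j(1) j(2), of "Suc m"] cpow_in[OF j(1) j(3), of "Suc m"] by blast+
        have V': "x' \<in> V" "y' \<in> V" using xy' ejV j by auto
        have "x' \<noteq> y'" using lt' by auto
        have col: "s (\<pi> x') = s (\<pi> y')" using H unfolding word_def x'_def y'_def \<chi>_def by auto
        have "Rp \<pi> x' y'" by (rule block'[OF pi s V' lt' col])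
        then have "\<pi> (c j x') < \<pi> (c j y')" using Rp_edge[OF j(1) xy' \<open>x' \<noteq> y'\<close>] by simp
        then show "\<pi> ((c j ^^ Suc (Suc m)) x) < \<pi> ((c j ^^ Suc (Suc m)) y)"
          unfolding x'_def y'_def by simp
      qed
    qed
    have wd: "word \<chi> j x \<noteq> word \<chi> j y" using words_differ[OF pr ab abne] j_def x_def y_def by simp
    then have ex: "\<exists>m. word \<chi> j x m \<noteq> word \<chi> j y m" by auto
    define m where "m = (LEAST m. word \<chi> j x m \<noteq> word \<chi> j y m)"
    have m1: "word \<chi> j x m \<noteq> word \<chi> j y m" using LeastI_ex[OF ex] m_def by simp
    have m2: "\<forall>l<m. word \<chi> j x l = word \<chi> j y l" using not_less_Least m_def by blast
    have "\<pi> ((c j ^^ Suc m) x) < \<pi> ((c j ^^ Suc m) y)" using cl m2 by blast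
    moreover have "(c j ^^ Suc m) x \<in> V" "(c j ^^ Suc m) y \<in> V"
      using cpow_in[OF j(1) j(2), of "Suc m"] cpow_in[OF j(1) j(3), of "Suc m"] ejV[OF j(1)] by blast+
    ultimately have "word \<chi> j x m \<le> word \<chi> j y m" using mono unfolding word_def by blast
    then have "lexl (word \<chi> j x) (word \<chi> j y)" using m1 m2 unfolding lexl_def by (intro exI[of _ m]) auto
    then show ?thesis using True abne unfolding prec_def \<chi>_def j_def x_def y_def by simp
  qed
qed

lemma ord_iff:
  assumes pi: "\<pi> \<in> PiS" and s: "s \<in> FS \<alpha> \<pi>" and ab: "a \<in> V" "b \<in> V"
  shows "\<pi> a < \<pi> b \<longleftrightarrow> prec (\<lambda>v. s (\<pi> v)) a b"
proof
  assume "\<pi> a < \<pi> b" then show "prec (\<lambda>v. s (\<pi> v)) a b" using ord[OF pi s ab] by blast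
next
  assume p: "prec (\<lambda>v. s (\<pi> v)) a b"
  show "\<pi> a < \<pi> b"
  proof (rule ccontr)
    assume "\<not> \<pi> a < \<pi> b"
    moreover have "a \<noteq> b" using p prec_irrefl by metis
    then have "\<pi> a \<noteq> \<pi> b" using pi_facts(1)[OF pi] ab by (meson inj_onD)
    ultimately have "\<pi> b < \<pi> a" by simp
    then show False using ord[OF pi s ab(2,1)] prec_asym[OF ab p] by blast
  qed
qed

lemma rank:
  assumes pi: "\<pi> \<in> PiS" and v: "v \<in> V"
  shows "\<pi> v = Suc (card {w \<in> V. \<pi> w < \<pi> v})"
proof -
  note pf = pi_facts[OF pi]
  have "\<pi> ` {w \<in> V. \<pi> w < \<pi> v} = {1..<\<pi> v}"
  proof
    show "\<pi> ` {w \<in> V. \<pi> w < \<pi> v} \<subseteq> {1..<\<pi> v}" using pf(2) by auto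
    show "{1..<\<pi> v} \<subseteq> \<pi> ` {w \<in> V. \<pi> w < \<pi> v}"
    proof
      fix i assume i: "i \<in> {1..<\<pi> v}"
      then have "i \<in> {1..card V}" using pf(2)[OF v] by auto
      then show "i \<in> \<pi> ` {w \<in> V. \<pi> w < \<pi> v}" using pf(3)[of i] i by (metis (mono_tags, lifting) atLeastLessThan_iff image_eqI mem_Collect_eq)
    qed
  qed
  moreover have "inj_on \<pi> {w \<in> V. \<pi> w < \<pi> v}" using pf(1) by (rule inj_on_subset) auto
  ultimately have "card {w \<in> V. \<pi> w < \<pi> v} = \<pi> v - 1" by (metis card_atLeastLessThan card_image)
  moreover have "1 \<le> \<pi> v" using pf(2)[OF v] by auto
  ultimately show ?thesis by simp
qed

end




context htree2 begin

definition phi :: "('v \<Rightarrow> nat) \<times> (nat \<Rightarrow> nat) \<Rightarrow> 'v \<Rightarrow> nat" where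
  "phi p = restrict (\<lambda>v. snd p (fst p v)) V"

lemma content_eq:
  assumes pi: "\<pi> \<in> PiS"
  shows "card {v \<in> V. g (\<pi> v) = a} = card {j \<in> {1..card V}. g j = a}"
proof -
  note pf = pi_facts[OF pi]
  have "\<pi> ` {v \<in> V. g (\<pi> v) = a} = {j \<in> {1..card V}. g j = a}"
  proof
    show "\<pi> ` {v \<in> V. g (\<pi> v) = a} \<subseteq> {j \<in> {1..card V}. g j = a}" using pf(2) by auto
    show "{j \<in> {1..card V}. g j = a} \<subseteq> \<pi> ` {v \<in> V. g (\<pi> v) = a}"
    proof
      fix j assume j: "j \<in> {j \<in> {1..card V}. g j = a}"
      then have "inv_into V \<pi> j \<in> V" "\<pi> (inv_into V \<pi> j) = j" using pf(3) by auto
      then show "j \<in> \<pi> ` {v \<in> V. g (\<pi> v) = a}" using j by (metis (mono_tags, lifting) image_eqI mem_Collect_eq)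
    qed
  qed
  moreover have "inj_on \<pi> {v \<in> V. g (\<pi> v) = a}" using pf(1) by (rule inj_on_subset) auto
  ultimately show ?thesis by (metis card_image)
qed

lemma phi_into:
  assumes pi: "\<pi> \<in> PiS" and s: "s \<in> FS \<alpha> \<pi>"
  shows "phi (\<pi>, s) \<in> XS \<alpha>"
proof -
  note pf = pi_facts[OF pi]
  have pr: "proper (\<lambda>v. s (\<pi> v))" by (rule chi_proper[OF pi s])
  have A: "phi (\<pi>, s) \<in> V \<rightarrow>\<^sub>E UNIV" unfolding phi_def by simp
  have B: "\<forall>v\<in>V. phi (\<pi>, s) v \<ge> 1" using s pf(2) unfolding phi_def FS_def by auto
  have C: "\<forall>f\<in>E. \<exists>u\<in>f. \<exists>w\<in>f. phi (\<pi>, s) u \<noteq> phi (\<pi>, s) w"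
  proof
    fix f assume f: "f \<in> E"
    then obtain u w where "u \<in> f" "w \<in> f" "s (\<pi> u) \<noteq> s (\<pi> w)" using pr unfolding proper_def by blast
    moreover have "f \<subseteq> V" using EV f by simp
    ultimately show "\<exists>u\<in>f. \<exists>w\<in>f. phi (\<pi>, s) u \<noteq> phi (\<pi>, s) w" unfolding phi_def by auto
  qed
  have D: "card {v \<in> V. phi (\<pi>, s) v = a} = \<alpha> a" for a
  proof -
    have "{v \<in> V. phi (\<pi>, s) v = a} = {v \<in> V. s (\<pi> v) = a}" unfolding phi_def by auto
    then show ?thesis using content_eq[OF pi, of s a] s unfolding FS_def by simp
  qed
  show ?thesis using A B C D unfolding XS_def by blast
qed

lemma phi_inj: "inj_on phi (SIGMA \<pi>:PiS. FS \<alpha> \<pi>)"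
proof (rule inj_onI)
  fix p1 p2 assume p1: "p1 \<in> (SIGMA \<pi>:PiS. FS \<alpha> \<pi>)" and p2: "p2 \<in> (SIGMA \<pi>:PiS. FS \<alpha> \<pi>)"
    and eq: "phi p1 = phi p2"
  obtain \<pi>1 s1 where q1: "p1 = (\<pi>1, s1)" "\<pi>1 \<in> PiS" "s1 \<in> FS \<alpha> \<pi>1" using p1 by auto
  obtain \<pi>2 s2 where q2: "p2 = (\<pi>2, s2)" "\<pi>2 \<in> PiS" "s2 \<in> FS \<alpha> \<pi>2" using p2 by auto
  have ch: "s1 (\<pi>1 v) = s2 (\<pi>2 v)" if "v \<in> V" for v
    using fun_cong[OF eq, of v] that q1 q2 unfolding phi_def by simp
  have ordeq: "\<pi>1 a < \<pi>1 b \<longleftrightarrow> \<pi>2 a < \<pi>2 b" if "a \<in> V" "b \<in> V" for a b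
  proof -
    have "\<pi>1 a < \<pi>1 b \<longleftrightarrow> prec (\<lambda>v. s1 (\<pi>1 v)) a b" using ord_iff[OF q1(2,3) that] .
    also have "\<dots> \<longleftrightarrow> prec (\<lambda>v. s2 (\<pi>2 v)) a b"
      using prec_cong[OF that, of "\<lambda>v. s1 (\<pi>1 v)" "\<lambda>v. s2 (\<pi>2 v)"] ch by simp
    also have "\<dots> \<longleftrightarrow> \<pi>2 a < \<pi>2 b" using ord_iff[OF q2(2,3) that] by simp
    finally show ?thesis .
  qed
  have pv: "\<pi>1 v = \<pi>2 v" if "v \<in> V" for v
  proof -
    have "{w \<in> V. \<pi>1 w < \<pi>1 v} = {w \<in> V. \<pi>2 w < \<pi>2 v}" using ordeq that by auto
    then show ?thesis using rank[OF q1(2) that] rank[OF q2(2) that] by simp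
  qed
  have "\<pi>1 = \<pi>2" using q1(2) q2(2) pv unfolding PiS_def by (auto intro: PiE_ext)
  moreover have "s1 = s2"
  proof (rule PiE_ext)
    show "s1 \<in> {1..card V} \<rightarrow>\<^sub>E UNIV" "s2 \<in> {1..card V} \<rightarrow>\<^sub>E UNIV" using q1 q2 unfolding FS_def by auto
    fix j assume j: "j \<in> {1..card V}"
    obtain v where v: "v \<in> V" "\<pi>1 v = j" using pi_facts(3)[OF q1(2) j] by blast
    then show "s1 j = s2 j" using ch[OF v(1)] pv[OF v(1)] by simp
  qed
  ultimately show "p1 = p2" using q1 q2 by simp
qed

lemma phi_surj:
  assumes chi: "\<chi> \<in> XS \<alpha>"
  shows "\<exists>p \<in> (SIGMA \<pi>:PiS. FS \<alpha> \<pi>). phi p = \<chi>"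
proof -
  have chiE: "\<chi> \<in> V \<rightarrow>\<^sub>E UNIV" and chi1: "\<forall>v\<in>V. \<chi> v \<ge> 1"
    and pr: "proper \<chi>" and cont: "\<And>a. card {v \<in> V. \<chi> v = a} = \<alpha> a"
    using chi unfolding XS_def proper_def by auto
  define \<pi> where "\<pi> = restrict (\<lambda>v. Suc (card {w \<in> V. prec \<chi> w v})) V"
  have mono: "\<pi> a < \<pi> b" if ab: "a \<in> V" "b \<in> V" and p: "prec \<chi> a b" for a b
  proof -
    have "{w \<in> V. prec \<chi> w a} \<subset> {w \<in> V. prec \<chi> w b}"
    proof
      show "{w \<in> V. prec \<chi> w a} \<subseteq> {w \<in> V. prec \<chi> w b}" using prec_trans ab p by blast
      show "{w \<in> V. prec \<chi> w a} \<noteq> {w \<in> V. prec \<chi> w b}" using ab p prec_irrefl by blast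
    qed
    then have "card {w \<in> V. prec \<chi> w a} < card {w \<in> V. prec \<chi> w b}"
      using finV by (intro psubset_card_mono) auto
    then show ?thesis using ab unfolding \<pi>_def by simp
  qed
  have piff: "\<pi> a < \<pi> b \<longleftrightarrow> prec \<chi> a b" if ab: "a \<in> V" "b \<in> V" for a b
  proof
    assume lt: "\<pi> a < \<pi> b"
    show "prec \<chi> a b"
    proof (rule ccontr)
      assume np: "\<not> prec \<chi> a b"
      have "a \<noteq> b" using lt by auto
      then have "prec \<chi> b a" using prec_total[OF pr ab] np by blast
      then show False using mono[OF ab(2,1)] lt by simp
    qed
  qed (rule mono[OF ab])
  have inj: "inj_on \<pi> V"
  proof (rule inj_onI)
    fix a b assume ab: "a \<in> V" "b \<in> V" "\<pi> a = \<pi> b"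
    show "a = b"
    proof (rule ccontr)
      assume "a \<noteq> b"
      then have "prec \<chi> a b \<or> prec \<chi> b a" using prec_total[OF pr ab(1,2)] by blast
      then show False using mono ab by fastforce
    qed
  qed
  have rng: "\<pi> v \<in> {1..card V}" if v: "v \<in> V" for v
  proof -
    have "{w \<in> V. prec \<chi> w v} \<subseteq> V - {v}" using prec_irrefl by blast
    then have "card {w \<in> V. prec \<chi> w v} \<le> card (V - {v})" using finV by (intro card_mono) auto
    also have "\<dots> = card V - 1" using v finV by simp
    finally have "card {w \<in> V. prec \<chi> w v} \<le> card V - 1" .
    moreover have "card V \<ge> 1" using v finV card_gt_0_iff[of V] by auto
    ultimately show ?thesis using v unfolding \<pi>_def by simp
  qed
  have img: "\<pi> ` V = {1..card V}"
  proof (rule card_subset_eq)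
    show "finite {1..card V}" by simp
    show "\<pi> ` V \<subseteq> {1..card V}" using rng by blast
    show "card (\<pi> ` V) = card {1..card V}" using inj by (simp add: card_image)
  qed
  have piS: "\<pi> \<in> PiS" unfolding PiS_def bij_betw_def using inj img rng unfolding \<pi>_def
    by auto
  note pf = pi_facts[OF piS]
  define s where "s = restrict (\<lambda>j. \<chi> (inv_into V \<pi> j)) {1..card V}"
  have sFS: "s \<in> FS \<alpha> \<pi>"
    unfolding FS_def
  proof (intro CollectI conjI allI impI ballI)
    show "s \<in> {1..card V} \<rightarrow>\<^sub>E UNIV" unfolding s_def by simp
  next
    fix j assume "j \<in> {1..card V}"
    then show "s j \<ge> 1" using pf(3) chi1 unfolding s_def by auto
  next
    fix a
    have "{j \<in> {1..card V}. s j = a} = {j \<in> {1..card V}. \<chi> (inv_into V \<pi> j) = a}" unfolding s_def by auto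
    also have "card \<dots> = card {v \<in> V. \<chi> (inv_into V \<pi> (\<pi> v)) = a}"
      using content_eq[OF piS, of "\<lambda>j. \<chi> (inv_into V \<pi> j)" a] by simp
    also have "{v \<in> V. \<chi> (inv_into V \<pi> (\<pi> v)) = a} = {v \<in> V. \<chi> v = a}" using pf(4) by auto
    finally show "card {j \<in> {1..card V}. s j = a} = \<alpha> a" using cont by simp
  next
    fix j assume j: "1 \<le> j \<and> j < card V"
    define u where "u = inv_into V \<pi> j"
    define w where "w = inv_into V \<pi> (j + 1)"
    have uw: "u \<in> V" "\<pi> u = j" "w \<in> V" "\<pi> w = j + 1" using pf(3)[of j] pf(3)[of "j+1"] j
      unfolding u_def w_def by auto
    have sj: "s j = \<chi> u" "s (j + 1) = \<chi> w" using j unfolding s_def u_def w_def by auto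
    have p: "prec \<chi> u w" using piff[OF uw(1,3)] uw by simp
    then show "s j \<le> s (j + 1)" using sj unfolding prec_def by auto
    assume des: "j \<in> H_descents V E e k c \<pi>"
    show "s j < s (j + 1)"
    proof (rule ccontr)
      assume "\<not> s j < s (j + 1)"
      then have eqc: "\<chi> u = \<chi> w" using sj \<open>s j \<le> s (j + 1)\<close> by simp
      then have uw_ne: "u \<noteq> w" and lx: "lexl (word \<chi> (J u w) (X u w)) (word \<chi> (J u w) (Y u w))"
        using p unfolding prec_def by auto
      note xy = XY_proj[OF uw(1,3) uw_ne]
      define jj where "jj = J u w"
      define x where "x = X u w"
      define y where "y = Y u w"
      have jx: "jj \<in> {1..k}" "x \<in> e jj" "y \<in> e jj" "x \<noteq> y" using xy jj_def x_def y_def by auto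
      have gt: "\<pi> (c jj y) < \<pi> (c jj x)" using des Hdes[of j \<pi>] j
        unfolding u_def[symmetric] w_def[symmetric] jj_def x_def y_def by simp
      have cxy: "c jj y \<in> e jj" "c jj x \<in> e jj" "c jj y \<noteq> c jj x" using c_in c_inj jx by auto
      have cV: "c jj y \<in> V" "c jj x \<in> V" using cxy ejV jx by auto
      have p2: "prec \<chi> (c jj y) (c jj x)" using piff[OF cV] gt by simp
      note je = J_edge[OF jx(1) cxy]
      have lx': "lexl (word \<chi> jj x) (word \<chi> jj y)" using lx jj_def x_def y_def by simp
      have h: "\<chi> (c jj x) \<le> \<chi> (c jj y)" using lexl_head[OF lx'] by (simp add: word0)
      have "\<chi> (c jj y) = \<chi> (c jj x) \<and> lexl (word \<chi> jj (c jj y)) (word \<chi> jj (c jj x))"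
        using p2 je h unfolding prec_def by auto
      then have "lexl (\<lambda>m. word \<chi> jj y (Suc m)) (\<lambda>m. word \<chi> jj x (Suc m))" by (simp add: word_c)
      moreover have "lexl (\<lambda>m. word \<chi> jj x (Suc m)) (\<lambda>m. word \<chi> jj y (Suc m))"
        using lexl_shift[OF lx'] \<open>\<chi> (c jj y) = \<chi> (c jj x) \<and> _\<close> by (simp add: word0)
      ultimately show False using lexl_asym by blast
    qed
  qed
  have "phi (\<pi>, s) = \<chi>"
  proof (rule PiE_ext)
    show "phi (\<pi>, s) \<in> V \<rightarrow>\<^sub>E UNIV" unfolding phi_def by simp
    show "\<chi> \<in> V \<rightarrow>\<^sub>E UNIV" by (rule chiE)
    fix v assume v: "v \<in> V"
    then show "phi (\<pi>, s) v = \<chi> v" using pf(2)[OF v] pf(4)[OF v] unfolding phi_def s_def by simp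
  qed
  then show ?thesis using piS sFS by blast
qed

lemma finite_FS: "finite (FS \<alpha> \<pi>)"
proof (cases "FS \<alpha> \<pi> = {}")
  case False
  then obtain s0 where s0: "s0 \<in> FS \<alpha> \<pi>" by blast
  define A where "A = {a. 0 < \<alpha> a}"
  have "A \<subseteq> s0 ` {1..card V}"
  proof
    fix a assume "a \<in> A"
    then have "card {j \<in> {1..card V}. s0 j = a} > 0" using s0 unfolding A_def FS_def by auto
    then obtain j where "j \<in> {1..card V}" "s0 j = a" by (metis (mono_tags, lifting) card_gt_0_iff empty_Collect_eq)
    then show "a \<in> s0 ` {1..card V}" by blast
  qed
  then have finA: "finite A" using finite_surj by blast
  have "FS \<alpha> \<pi> \<subseteq> {1..card V} \<rightarrow>\<^sub>E A"
  proof
    fix s assume s: "s \<in> FS \<alpha> \<pi>"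
    have "s j \<in> A" if j: "j \<in> {1..card V}" for j
    proof -
      have "j \<in> {j' \<in> {1..card V}. s j' = s j}" using j by simp
      then have "card {j' \<in> {1..card V}. s j' = s j} > 0" by (subst card_gt_0_iff) auto
      then show ?thesis using s unfolding A_def FS_def by auto
    qed
    then show "s \<in> {1..card V} \<rightarrow>\<^sub>E A" using s unfolding FS_def by auto
  qed
  then show ?thesis using finA by (meson finite_PiE finite_atLeastAtMost finite_subset)
qed simp

lemma count: "card (XS \<alpha>) = (\<Sum>\<pi>\<in>PiS. card (FS \<alpha> \<pi>))"
proof -
  have "bij_betw phi (SIGMA \<pi>:PiS. FS \<alpha> \<pi>) (XS \<alpha>)"
    unfolding bij_betw_def
  proof
    show "inj_on phi (SIGMA \<pi>:PiS. FS \<alpha> \<pi>)" by (rule phi_inj)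
    show "phi ` (SIGMA \<pi>:PiS. FS \<alpha> \<pi>) = XS \<alpha>"
      using phi_into phi_surj by fastforce
  qed
  then have "card (XS \<alpha>) = card (SIGMA \<pi>:PiS. FS \<alpha> \<pi>)" by (simp add: bij_betw_same_card)
  also have "\<dots> = (\<Sum>\<pi>\<in>PiS. card (FS \<alpha> \<pi>))"
  proof (rule card_SigmaI)
    have "PiS \<subseteq> V \<rightarrow>\<^sub>E {1..card V}" unfolding PiS_def by auto
    then show "finite PiS" using finV by (meson finite_PiE finite_atLeastAtMost finite_subset)
    show "\<forall>a\<in>PiS. finite (FS \<alpha> a)" using finite_FS by blast
  qed
  finally show ?thesis .
qed

end



theorem theorem4p3:
  fixes V :: "'v set" and E :: "'v set set" and n k :: nat
    and e :: "nat \<Rightarrow> 'v set" and c :: "nat \<Rightarrow> 'v \<Rightarrow> 'v"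
  assumes "hypertree V E"
    and "card V = n"
    and "\<forall>f\<in>E. prime (card f)"
    and "E = e ` {1..k}" and "inj_on e {1..k}"
    and "\<forall>i. 1 \<le> i \<and> i < k \<longrightarrow> card ((\<Union>j\<in>{1..i}. e j) \<inter> e (i+1)) = 1"
    and "\<forall>i\<in>{1..k}. cyclic_perm (c i) (e i)"
  shows "\<forall>\<alpha> :: nat \<Rightarrow> nat. X_coeff V E \<alpha> =
           (\<Sum>\<pi> \<in> {\<pi> \<in> V \<rightarrow>\<^sub>E {1..n}. bij_betw \<pi> V {1..n}}.
               F_coeff n (H_descents V E e k c \<pi>) \<alpha>)"
proof -
  interpret H: htree2 V E e k c
    by unfold_locales (use assms in auto)
  show ?thesis
  proof
    fix \<alpha> :: "nat \<Rightarrow> nat"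
    have "X_coeff V E \<alpha> = card (H.XS \<alpha>)" unfolding X_coeff_def H.XS_def by simp
    also have "\<dots> = (\<Sum>\<pi>\<in>H.PiS. card (H.FS \<alpha> \<pi>))" by (rule H.count)
    also have "\<dots> = (\<Sum>\<pi> \<in> {\<pi> \<in> V \<rightarrow>\<^sub>E {1..n}. bij_betw \<pi> V {1..n}}.
               F_coeff n (H_descents V E e k c \<pi>) \<alpha>)"
      unfolding H.PiS_def H.FS_def F_coeff_def assms(2) by simp
    finally show "X_coeff V E \<alpha> = (\<Sum>\<pi> \<in> {\<pi> \<in> V \<rightarrow>\<^sub>E {1..n}. bij_betw \<pi> V {1..n}}.
               F_coeff n (H_descents V E e k c \<pi>) \<alpha>)" .
  qed
qed

end
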